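(* For every $k\ge1$ there is $c>0$ such that, for every $n>2k$ and every pair of weighted hypergraphs $w,u:[n]^{(k)}\to\mathbb{R}$, $$\mathbb{E}_\pi|\langle w_\pi,u\rangle|\ge cn^k\sum_{i=0}^k n^{-i/2}W_iU_i,$$ where $\pi$ is a uniformly random permutation of $[n]$ and $(W_0,\ldots,W_k)$, $(U_0,\ldots,U_k)$ are the $W$-vectors of $w$ and $u$ respectively.
   Context: $[n]=\{1,\ldots,n\}$; $V^{(k)}$ is the family of $k$-subsets of $V$. A weighted $k$-uniform hypergraph on $V$ is a function $w:V^{(k)}\to\mathbb{R}$; $w(S)=\sum_{e\in S^{(k)}}w(e)$, $\langle w,u\rangle=\sum_{e\in V^{(k)}}w(e)u(e)$, and $w_\pi(e)=w(\pi^{-1}(e))$ for a permutation $\pi$ of $V$. $W$-vector (defined recursively on $k$): for a weighted $k$-uniform hypergraph $w$ on an $n$-set $V$, $W_0=|w(V)|/\binom nk$ (for $k=0$, $w$ is a single real number and $W_0=|w|$). For $k\ge1$ and distinct $x,y\in V$, the difference weighting $w^{xy}:(V\setminus\{x,y\})^{(k-1)}\to\mathbb{R}$ is $w^{xy}(e)=w(e\cup\{x\})-w(e\cup\{y\})$; letting $(W^{xy}_0,\ldots,W^{xy}_{k-1})$ be its $W$-vector, for $1\le i\le k$, $W_i=\frac{1}{n(n-1)}\sum_{(x,y):\,x\ne y}W^{xy}_{i-1}$ (average over ordered pairs of distinct vertices). The $W$-vector is $(W_0,\ldots,W_k)$. *)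

theory Defs
  imports "HOL-Analysis.Analysis" "HOL-Combinatorics.Permutations"
begin

definition ksets :: "'a set \<Rightarrow> nat \<Rightarrow> 'a set set" where
  "ksets V k = {e. e \<subseteq> V \<and> card e = k}"

text \<open>Weighted k-uniform hypergraphs are functions on sets; only values on
  k-subsets of the vertex set are ever read.\<close>
fun Wvec :: "nat \<Rightarrow> 'a set \<Rightarrow> ('a set \<Rightarrow> real) \<Rightarrow> nat \<Rightarrow> real" where
  "Wvec k V w 0 = \<bar>\<Sum>e\<in>ksets V k. w e\<bar> / real (card V choose k)"
| "Wvec k V w (Suc i) =
     (\<Sum>p\<in>{(x,y). x \<in> V \<and> y \<in> V \<and> x \<noteq> y}.
        Wvec (k - 1) (V - {fst p, snd p})
             (\<lambda>e. w (insert (fst p) e) - w (insert (snd p) e)) i)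
     / (real (card V) * (real (card V) - 1))"

definition perm_weight :: "('a \<Rightarrow> 'a) \<Rightarrow> ('a set \<Rightarrow> real) \<Rightarrow> 'a set \<Rightarrow> real" where
  "perm_weight \<pi> w e = w (inv \<pi> ` e)"

definition hyp_inner :: "'a set \<Rightarrow> nat \<Rightarrow> ('a set \<Rightarrow> real) \<Rightarrow> ('a set \<Rightarrow> real) \<Rightarrow> real" where
  "hyp_inner V k w u = (\<Sum>e\<in>ksets V k. w e * u e)"

end

theory Submission
  imports Defs
begin

definition cube :: "nat \<Rightarrow> (nat \<Rightarrow> bool) set" where
  "cube m = {\<epsilon>. \<forall>i\<ge>m. \<not> \<epsilon> i}"

lemma cube_0: "cube 0 = {\<lambda>_. False}"
  unfolding cube_def by auto

lemma cube_Suc: "cube (Suc m) = cube m \<union> (\<lambda>\<epsilon>. \<epsilon>(m:=True)) ` cube m"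
proof (intro equalityI subsetI)
  fix \<epsilon> assume e: "\<epsilon> \<in> cube (Suc m)"
  show "\<epsilon> \<in> cube m \<union> (\<lambda>\<epsilon>. \<epsilon>(m:=True)) ` cube m"
  proof (cases "\<epsilon> m")
    case True
    have "\<epsilon>(m:=False) \<in> cube m" using e by (auto simp: cube_def)
    moreover have "\<epsilon> = (\<epsilon>(m:=False))(m:=True)" using True by (auto simp: fun_eq_iff)
    ultimately show ?thesis by blast
  next
    case False
    have "\<forall>i\<ge>m. \<not> \<epsilon> i"
    proof (intro allI impI)
      fix i assume "m \<le> i"
      show "\<not> \<epsilon> i"
      proof (cases "i = m")
        case True then show ?thesis using False by simp
      next
        case False then have "Suc m \<le> i" using \<open>m \<le> i\<close> by simp
        then show ?thesis using e by (simp add: cube_def)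
      qed
    qed
    then have "\<epsilon> \<in> cube m" by (simp add: cube_def)
    then show ?thesis by blast
  qed
next
  fix \<epsilon> assume "\<epsilon> \<in> cube m \<union> (\<lambda>\<epsilon>. \<epsilon>(m:=True)) ` cube m"
  then show "\<epsilon> \<in> cube (Suc m)" by (auto simp: cube_def)
qed

lemma finite_cube: "finite (cube m)"
  by (induction m) (simp_all add: cube_0 cube_Suc)

lemma cube_m: "\<epsilon> \<in> cube m \<Longrightarrow> \<epsilon> m = False"
  by (auto simp: cube_def)

lemma sum_cube_Suc:
  "(\<Sum>\<epsilon>\<in>cube (Suc m). f \<epsilon>) = (\<Sum>\<epsilon>\<in>cube m. f \<epsilon> + f (\<epsilon>(m:=True)))"
proof -
  have inj: "inj_on (\<lambda>\<epsilon>. \<epsilon>(m:=True)) (cube m)"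
  proof (rule inj_onI)
    fix a b assume a: "a \<in> cube m" and b: "b \<in> cube m" and eq: "a(m:=True) = b(m:=True)"
    show "a = b"
    proof
      fix i show "a i = b i"
        using fun_cong[OF eq, of i] cube_m[OF a] cube_m[OF b] by (cases "i = m") auto
    qed
  qed
  have disj: "cube m \<inter> (\<lambda>\<epsilon>. \<epsilon>(m:=True)) ` cube m = {}"
    using cube_m by fastforce
  have "(\<Sum>\<epsilon>\<in>cube (Suc m). f \<epsilon>) = (\<Sum>\<epsilon>\<in>cube m. f \<epsilon>) + (\<Sum>\<epsilon>\<in>(\<lambda>\<epsilon>. \<epsilon>(m:=True)) ` cube m. f \<epsilon>)"
    unfolding cube_Suc by (rule sum.union_disjoint) (auto simp: finite_cube disj)
  also have "(\<Sum>\<epsilon>\<in>(\<lambda>\<epsilon>. \<epsilon>(m:=True)) ` cube m. f \<epsilon>) = (\<Sum>\<epsilon>\<in>cube m. f (\<epsilon>(m:=True)))"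
    by (rule sum.reindex[OF inj, unfolded comp_def])
  finally show ?thesis by (simp add: sum.distrib)
qed

definition E :: "nat \<Rightarrow> ((nat \<Rightarrow> bool) \<Rightarrow> real) \<Rightarrow> real" where
  "E m f = (\<Sum>\<epsilon>\<in>cube m. f \<epsilon>) / 2 ^ m"

lemma E_0: "E 0 f = f (\<lambda>_. False)"
  by (simp add: E_def cube_0)

lemma E_Suc: "E (Suc m) f = (E m f + E m (\<lambda>\<epsilon>. f (\<epsilon>(m:=True)))) / 2"
  by (simp add: E_def sum_cube_Suc sum.distrib add_divide_distrib)

lemma E_const: "E m (\<lambda>_. c) = c"
  by (induction m) (simp_all add: E_0 E_Suc)

lemma E_cong: "(\<And>\<epsilon>. \<epsilon> \<in> cube m \<Longrightarrow> f \<epsilon> = g \<epsilon>) \<Longrightarrow> E m f = E m g"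
  unfolding E_def by (simp cong: sum.cong)

lemma E_add: "E m (\<lambda>\<epsilon>. f \<epsilon> + g \<epsilon>) = E m f + E m g"
  unfolding E_def by (simp add: sum.distrib add_divide_distrib)

lemma E_cmult: "E m (\<lambda>\<epsilon>. c * f \<epsilon>) = c * E m f"
  unfolding E_def by (simp add: sum_distrib_left)

lemma E_mono: "(\<And>\<epsilon>. \<epsilon> \<in> cube m \<Longrightarrow> f \<epsilon> \<le> g \<epsilon>) \<Longrightarrow> E m f \<le> E m g"
  unfolding E_def by (intro divide_right_mono sum_mono) auto

lemma E_nonneg: "(\<And>\<epsilon>. \<epsilon> \<in> cube m \<Longrightarrow> 0 \<le> f \<epsilon>) \<Longrightarrow> 0 \<le> E m f"
  using E_mono[of m "\<lambda>_. 0" f] by (simp add: E_const)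

lemma E_CS: "(E m (\<lambda>\<epsilon>. a \<epsilon> * b \<epsilon>))\<^sup>2 \<le> E m (\<lambda>\<epsilon>. (a \<epsilon>)\<^sup>2) * E m (\<lambda>\<epsilon>. (b \<epsilon>)\<^sup>2)"
proof -
  have "(\<Sum>\<epsilon>\<in>cube m. a \<epsilon> * b \<epsilon>)\<^sup>2 \<le> (\<Sum>\<epsilon>\<in>cube m. (a \<epsilon>)\<^sup>2) * (\<Sum>\<epsilon>\<in>cube m. (b \<epsilon>)\<^sup>2)"
    by (rule Cauchy_Schwarz_ineq_sum)
  then have "(\<Sum>\<epsilon>\<in>cube m. a \<epsilon> * b \<epsilon>)\<^sup>2 / (2^m)\<^sup>2 \<le> (\<Sum>\<epsilon>\<in>cube m. (a \<epsilon>)\<^sup>2) * (\<Sum>\<epsilon>\<in>cube m. (b \<epsilon>)\<^sup>2) / (2^m)\<^sup>2"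
    by (intro divide_right_mono) auto
  then show ?thesis unfolding E_def by (simp add: power_divide power2_eq_square)
qed

definition junta :: "nat set \<Rightarrow> ((nat \<Rightarrow> bool) \<Rightarrow> real) \<Rightarrow> bool" where
  "junta S g \<longleftrightarrow> (\<forall>\<epsilon> \<epsilon>'. (\<forall>i\<in>S. \<epsilon> i = \<epsilon>' i) \<longrightarrow> g \<epsilon> = g \<epsilon>')"

inductive deg_le :: "nat \<Rightarrow> ((nat \<Rightarrow> bool) \<Rightarrow> real) \<Rightarrow> bool" for k where
  deg_zero: "deg_le k (\<lambda>_. 0)"
| deg_add: "junta S g \<Longrightarrow> finite S \<Longrightarrow> card S \<le> k \<Longrightarrow> deg_le k f \<Longrightarrow> deg_le k (\<lambda>\<epsilon>. g \<epsilon> + f \<epsilon>)"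

lemma deg_le_0_const: "deg_le 0 f \<Longrightarrow> f \<epsilon> = f \<epsilon>'"
proof (induction rule: deg_le.induct)
  case deg_zero then show ?case by simp
next
  case (deg_add S g f)
  then have "S = {}" by auto
  then have "g \<epsilon> = g \<epsilon>'" using deg_add(1) unfolding junta_def by auto
  then show ?case using deg_add by simp
qed

lemma deg_le_split:
  assumes "deg_le k f"
  shows "deg_le k (\<lambda>\<epsilon>. (f (\<epsilon>(m:=False)) + f (\<epsilon>(m:=True))) / 2) \<and>
         deg_le (k - 1) (\<lambda>\<epsilon>. (f (\<epsilon>(m:=True)) - f (\<epsilon>(m:=False))) / 2)"
  using assms
proof (induction rule: deg_le.induct)
  case deg_zero
  then show ?case by (simp add: deg_le.deg_zero)
next
  case (deg_add S g f)
  let ?g1 = "\<lambda>\<epsilon>. (g (\<epsilon>(m:=False)) + g (\<epsilon>(m:=True))) / 2"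
  let ?g2 = "\<lambda>\<epsilon>. (g (\<epsilon>(m:=True)) - g (\<epsilon>(m:=False))) / 2"
  let ?S2 = "if m \<in> S then S - {m} else {}"
  have j1: "junta S ?g1" unfolding junta_def
  proof (intro allI impI)
    fix \<epsilon> \<epsilon>' :: "nat \<Rightarrow> bool" assume a: "\<forall>i\<in>S. \<epsilon> i = \<epsilon>' i"
    have "\<forall>i\<in>S. (\<epsilon>(m:=b)) i = (\<epsilon>'(m:=b)) i" for b using a by auto
    then have "g (\<epsilon>(m:=b)) = g (\<epsilon>'(m:=b))" for b using deg_add(1) unfolding junta_def by blast
    then show "?g1 \<epsilon> = ?g1 \<epsilon>'" by simp
  qed
  have j2: "junta ?S2 ?g2"
  proof (cases "m \<in> S")
    case True
    show ?thesis unfolding junta_def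
    proof (intro allI impI)
      fix \<epsilon> \<epsilon>' :: "nat \<Rightarrow> bool" assume a: "\<forall>i\<in>?S2. \<epsilon> i = \<epsilon>' i"
      have "\<forall>i\<in>S. (\<epsilon>(m:=b)) i = (\<epsilon>'(m:=b)) i" for b using a True by auto
      then have "g (\<epsilon>(m:=b)) = g (\<epsilon>'(m:=b))" for b using deg_add(1) unfolding junta_def by blast
      then show "?g2 \<epsilon> = ?g2 \<epsilon>'" by simp
    qed
  next
    case False
    have "?g2 \<epsilon> = 0" for \<epsilon>
    proof -
      have "\<forall>i\<in>S. (\<epsilon>(m:=True)) i = (\<epsilon>(m:=False)) i" using False by auto
      then have "g (\<epsilon>(m:=True)) = g (\<epsilon>(m:=False))" using deg_add(1) unfolding junta_def by blast
      then show ?thesis by simp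
    qed
    then show ?thesis unfolding junta_def by simp
  qed
  have c2: "card ?S2 \<le> k - 1" using deg_add(3) deg_add(2) by auto
  have A: "deg_le k (\<lambda>\<epsilon>. ?g1 \<epsilon> + (f (\<epsilon>(m:=False)) + f (\<epsilon>(m:=True))) / 2)"
    using deg_le.deg_add[OF j1 deg_add(2,3)] deg_add(5) by blast
  have B: "deg_le (k-1) (\<lambda>\<epsilon>. ?g2 \<epsilon> + (f (\<epsilon>(m:=True)) - f (\<epsilon>(m:=False))) / 2)"
  proof -
    have fS2: "finite ?S2" using deg_add(2) by auto
    show ?thesis by (rule deg_le.deg_add[OF j2 fS2 c2]) (use deg_add(5) in blast)
  qed
  have e1: "(\<lambda>\<epsilon>. ((\<lambda>\<epsilon>. g \<epsilon> + f \<epsilon>) (\<epsilon>(m:=False)) + (\<lambda>\<epsilon>. g \<epsilon> + f \<epsilon>) (\<epsilon>(m:=True))) / 2)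
     = (\<lambda>\<epsilon>. ?g1 \<epsilon> + (f (\<epsilon>(m:=False)) + f (\<epsilon>(m:=True))) / 2)"
    by (rule ext) (simp only: add_divide_distrib diff_divide_distrib algebra_simps)
  have e2: "(\<lambda>\<epsilon>. ((\<lambda>\<epsilon>. g \<epsilon> + f \<epsilon>) (\<epsilon>(m:=True)) - (\<lambda>\<epsilon>. g \<epsilon> + f \<epsilon>) (\<epsilon>(m:=False))) / 2)
     = (\<lambda>\<epsilon>. ?g2 \<epsilon> + (f (\<epsilon>(m:=True)) - f (\<epsilon>(m:=False))) / 2)"
    by (rule ext) (simp only: add_divide_distrib diff_divide_distrib algebra_simps)
  show ?case unfolding e1 e2 using A B by blast
qed

lemma deg_le_sum:
  assumes "finite I" "\<And>i. i \<in> I \<Longrightarrow> junta (S i) (g i) \<and> finite (S i) \<and> card (S i) \<le> k"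
  shows "deg_le k (\<lambda>\<epsilon>. \<Sum>i\<in>I. g i \<epsilon>)"
  using assms
proof (induction I rule: finite_induct)
  case empty then show ?case by (simp add: deg_le.deg_zero)
next
  case (insert x F)
  then show ?case using deg_le.deg_add[of "S x" "g x" k "\<lambda>\<epsilon>. \<Sum>i\<in>F. g i \<epsilon>"] by simp
qed


lemma E_half: "(E m f + E m g) / 2 = E m (\<lambda>\<epsilon>. (f \<epsilon> + g \<epsilon>) / 2)"
  unfolding E_def by (simp add: sum.distrib sum_divide_distrib[symmetric] add_divide_distrib)

lemma E_Suc_split:
  fixes m :: nat and f g h :: "(nat \<Rightarrow> bool) \<Rightarrow> real" and \<phi> :: "real \<Rightarrow> real"
  assumes g_def: "\<And>\<epsilon>. g \<epsilon> = (f (\<epsilon>(m:=False)) + f (\<epsilon>(m:=True))) / 2"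
      and h_def: "\<And>\<epsilon>. h \<epsilon> = (f (\<epsilon>(m:=True)) - f (\<epsilon>(m:=False))) / 2"
  shows "E (Suc m) (\<lambda>\<epsilon>. \<phi> (f \<epsilon>)) = E m (\<lambda>\<epsilon>. (\<phi> (g \<epsilon> - h \<epsilon>) + \<phi> (g \<epsilon> + h \<epsilon>)) / 2)"
proof -
  have a: "f \<epsilon> = g \<epsilon> - h \<epsilon>" if "\<epsilon> \<in> cube m" for \<epsilon>
  proof -
    have "\<epsilon>(m:=False) = \<epsilon>" using cube_m[OF that] by (auto simp: fun_eq_iff)
    then show ?thesis unfolding g_def h_def by (simp add: field_simps)
  qed
  have b: "f (\<epsilon>(m:=True)) = g \<epsilon> + h \<epsilon>" for \<epsilon>
    unfolding g_def h_def by (simp add: field_simps)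
  have "E (Suc m) (\<lambda>\<epsilon>. \<phi> (f \<epsilon>)) = (E m (\<lambda>\<epsilon>. \<phi> (g \<epsilon> - h \<epsilon>)) + E m (\<lambda>\<epsilon>. \<phi> (g \<epsilon> + h \<epsilon>))) / 2"
    unfolding E_Suc b using a by (simp cong: E_cong)
  also have "\<dots> = E m (\<lambda>\<epsilon>. (\<phi> (g \<epsilon> - h \<epsilon>) + \<phi> (g \<epsilon> + h \<epsilon>)) / 2)"
    by (rule E_half)
  finally show ?thesis .
qed

lemma sqrt_helpers:
  fixes x :: real
  shows "sqrt \<bar>x\<bar> * (\<bar>x\<bar> * sqrt \<bar>x\<bar>) = x\<^sup>2"
    and "(sqrt \<bar>x\<bar>)\<^sup>2 = \<bar>x\<bar>"
    and "(\<bar>x\<bar> * sqrt \<bar>x\<bar>)\<^sup>2 = \<bar>x\<bar> ^ 3"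
proof -
  have s: "sqrt \<bar>x\<bar> * sqrt \<bar>x\<bar> = \<bar>x\<bar>" by simp
  show "sqrt \<bar>x\<bar> * (\<bar>x\<bar> * sqrt \<bar>x\<bar>) = x\<^sup>2"
    by (metis s mult.left_commute abs_mult_self_eq power2_eq_square)
  show "(sqrt \<bar>x\<bar>)\<^sup>2 = \<bar>x\<bar>" by (simp add: power2_eq_square)
  show "(\<bar>x\<bar> * sqrt \<bar>x\<bar>)\<^sup>2 = \<bar>x\<bar> ^ 3"
    by (metis s power2_eq_square power3_eq_cube mult.assoc mult.left_commute)
qed

lemma quart_id: "((a - b) ^ 4 + (a + b) ^ 4) / 2 = a ^ 4 + 6 * (a\<^sup>2 * b\<^sup>2) + (b::real) ^ 4"
  by (simp add: power4_eq_xxxx power2_eq_square field_simps)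

lemma bonami:
  assumes "deg_le k f"
  shows "E m (\<lambda>\<epsilon>. f \<epsilon> ^ 4) \<le> 9 ^ k * (E m (\<lambda>\<epsilon>. f \<epsilon> ^ 2))\<^sup>2"
  using assms
proof (induction m arbitrary: k f)
  case 0
  have "f (\<lambda>_. False) ^ 4 \<le> 9 ^ k * f (\<lambda>_. False) ^ 4"
    using mult_right_mono[of 1 "9 ^ k" "f (\<lambda>_. False) ^ 4"] by simp
  then show ?case by (simp add: E_0 power_mult[symmetric])
next
  case (Suc m)
  show ?case
  proof (cases k)
    case 0
    then have c: "f \<epsilon> = f (\<lambda>_. False)" for \<epsilon> using deg_le_0_const Suc.prems by blast
    have "E (Suc m) (\<lambda>\<epsilon>. f \<epsilon> ^ 4) = f (\<lambda>_. False) ^ 4" by (subst c) (simp add: E_const)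
    moreover have "E (Suc m) (\<lambda>\<epsilon>. f \<epsilon> ^ 2) = f (\<lambda>_. False) ^ 2" by (subst c) (simp add: E_const)
    ultimately show ?thesis using 0 by (simp add: power_mult[symmetric])
  next
    case (Suc k')
    define g where "g \<equiv> \<lambda>\<epsilon>. (f (\<epsilon>(m:=False)) + f (\<epsilon>(m:=True))) / 2"
    define h where "h \<equiv> \<lambda>\<epsilon>. (f (\<epsilon>(m:=True)) - f (\<epsilon>(m:=False))) / 2"
    have sp: "deg_le k g \<and> deg_le (k-1) h" unfolding g_def h_def by (rule deg_le_split[OF Suc.prems])
    have gd: "\<And>\<epsilon>. g \<epsilon> = (f (\<epsilon>(m:=False)) + f (\<epsilon>(m:=True))) / 2" by (simp add: g_def)
    have hd: "\<And>\<epsilon>. h \<epsilon> = (f (\<epsilon>(m:=True)) - f (\<epsilon>(m:=False))) / 2" by (simp add: h_def)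
    have dg: "deg_le k g" and dh: "deg_le k' h" using sp Suc by simp_all
    define G where "G = E m (\<lambda>\<epsilon>. g \<epsilon> ^ 2)"
    define H where "H = E m (\<lambda>\<epsilon>. h \<epsilon> ^ 2)"
    define X where "X = E m (\<lambda>\<epsilon>. g \<epsilon> ^ 2 * h \<epsilon> ^ 2)"
    define t :: real where "t = 9 ^ k'"
    have t0: "t > 0" unfolding t_def by simp
    have G0: "G \<ge> 0" unfolding G_def by (rule E_nonneg) simp
    have H0: "H \<ge> 0" unfolding H_def by (rule E_nonneg) simp
    have X0: "X \<ge> 0" unfolding X_def by (rule E_nonneg) simp
    have IHg: "E m (\<lambda>\<epsilon>. g \<epsilon> ^ 4) \<le> 9 * t * G\<^sup>2"
      using Suc.IH[OF dg] Suc unfolding G_def t_def by simp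
    have IHh: "E m (\<lambda>\<epsilon>. h \<epsilon> ^ 4) \<le> t * H\<^sup>2"
      using Suc.IH[OF dh] unfolding H_def t_def by simp
    have "X\<^sup>2 \<le> E m (\<lambda>\<epsilon>. (g \<epsilon>^2)\<^sup>2) * E m (\<lambda>\<epsilon>. (h \<epsilon>^2)\<^sup>2)"
      unfolding X_def by (rule E_CS)
    also have "\<dots> = E m (\<lambda>\<epsilon>. g \<epsilon> ^ 4) * E m (\<lambda>\<epsilon>. h \<epsilon> ^ 4)"
      by (simp add: power_mult[symmetric])
    also have "\<dots> \<le> (9 * t * G\<^sup>2) * (t * H\<^sup>2)"
    proof -
      have a1: "0 \<le> 9 * t * G\<^sup>2" using t0 by simp
      have a2: "0 \<le> E m (\<lambda>\<epsilon>. h \<epsilon> ^ 4)" by (rule E_nonneg) simp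
      show ?thesis by (rule mult_mono[OF IHg IHh a1 a2])
    qed
    also have "\<dots> = (3 * t * G * H)\<^sup>2" by (simp add: power2_eq_square)
    finally have "X\<^sup>2 \<le> (3 * t * G * H)\<^sup>2" .
    then have Xb: "X \<le> 3 * t * G * H"
    proof (rule power2_le_imp_le)
      show "0 \<le> 3 * t * G * H" using t0 G0 H0 by simp
    qed
    have f4: "E (Suc m) (\<lambda>\<epsilon>. f \<epsilon> ^ 4) = E m (\<lambda>\<epsilon>. g \<epsilon> ^ 4 + 6 * (g \<epsilon> ^ 2 * h \<epsilon> ^ 2) + h \<epsilon> ^ 4)"
      unfolding E_Suc_split[OF gd hd, of "\<lambda>x. x ^ 4"]
      by (rule E_cong) (rule quart_id)
    also have "\<dots> = E m (\<lambda>\<epsilon>. g \<epsilon> ^ 4) + 6 * X + E m (\<lambda>\<epsilon>. h \<epsilon> ^ 4)"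
      unfolding X_def by (simp add: E_add E_cmult)
    finally have f4': "E (Suc m) (\<lambda>\<epsilon>. f \<epsilon> ^ 4) = E m (\<lambda>\<epsilon>. g \<epsilon> ^ 4) + 6 * X + E m (\<lambda>\<epsilon>. h \<epsilon> ^ 4)" .
    have f2: "E (Suc m) (\<lambda>\<epsilon>. f \<epsilon> ^ 2) = G + H"
      unfolding E_Suc_split[OF gd hd, of "\<lambda>x. x ^ 2"] G_def H_def
      by (subst E_add[symmetric]) (rule E_cong, simp add: algebra_simps power2_eq_square)
    have "E (Suc m) (\<lambda>\<epsilon>. f \<epsilon> ^ 4) \<le> 9 * t * G\<^sup>2 + 6 * (3 * t * G * H) + t * H\<^sup>2"
      unfolding f4' using IHg IHh Xb by linarith
    also have "\<dots> \<le> 9 * t * (G + H)\<^sup>2"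
    proof -
      have e: "9 * t * (G + H)\<^sup>2 = 9 * t * G\<^sup>2 + 6 * (3 * t * G * H) + 9 * t * H\<^sup>2"
        by (simp add: power2_eq_square algebra_simps)
      have "t * H\<^sup>2 \<le> 9 * t * H\<^sup>2" using t0 by simp
      then show ?thesis unfolding e by linarith
    qed
    finally show ?thesis unfolding f2 t_def Suc by simp
  qed
qed

definition D :: "nat \<Rightarrow> ((nat \<Rightarrow> bool) \<Rightarrow> real) \<Rightarrow> (nat \<Rightarrow> bool) \<Rightarrow> real" where
  "D j f \<epsilon> = (f (\<epsilon>(j:=True)) - f (\<epsilon>(j:=False))) / 2"

lemma influence:
  assumes "deg_le k f"
  shows "(\<Sum>j<m. E m (\<lambda>\<epsilon>. (D j f \<epsilon>)\<^sup>2)) \<le> real k * (E m (\<lambda>\<epsilon>. (f \<epsilon>)\<^sup>2) - (E m f)\<^sup>2)"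
  using assms
proof (induction m arbitrary: k f)
  case 0
  then show ?case by (simp add: E_0)
next
  case (Suc m)
  show ?case
  proof (cases k)
    case 0
    then have c: "f \<epsilon> = f \<epsilon>'" for \<epsilon> \<epsilon>' using deg_le_0_const Suc.prems by blast
    have "D j f \<epsilon> = 0" for j \<epsilon> unfolding D_def using c[of "\<epsilon>(j:=True)" "\<epsilon>(j:=False)"] by simp
    then show ?thesis using 0 by (simp add: E_const)
  next
    case (Suc k')
    define g where "g \<equiv> \<lambda>\<epsilon>. (f (\<epsilon>(m:=False)) + f (\<epsilon>(m:=True))) / 2"
    define h where "h \<equiv> \<lambda>\<epsilon>. (f (\<epsilon>(m:=True)) - f (\<epsilon>(m:=False))) / 2"
    have sp: "deg_le k g \<and> deg_le (k-1) h" unfolding g_def h_def by (rule deg_le_split[OF Suc.prems])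
    have gd: "\<And>\<epsilon>. g \<epsilon> = (f (\<epsilon>(m:=False)) + f (\<epsilon>(m:=True))) / 2" by (simp add: g_def)
    have hd: "\<And>\<epsilon>. h \<epsilon> = (f (\<epsilon>(m:=True)) - f (\<epsilon>(m:=False))) / 2" by (simp add: h_def)
    have dg: "deg_le k g" and dh: "deg_le k' h" using sp Suc by simp_all
    have IHg: "(\<Sum>j<m. E m (\<lambda>\<epsilon>. (D j g \<epsilon>)\<^sup>2)) \<le> real k * (E m (\<lambda>\<epsilon>. (g \<epsilon>)\<^sup>2) - (E m g)\<^sup>2)"
      using Suc.IH[OF dg] .
    have IHh: "(\<Sum>j<m. E m (\<lambda>\<epsilon>. (D j h \<epsilon>)\<^sup>2)) \<le> real k' * (E m (\<lambda>\<epsilon>. (h \<epsilon>)\<^sup>2) - (E m h)\<^sup>2)"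
      using Suc.IH[OF dh] .
    have Hn: "0 \<le> E m (\<lambda>\<epsilon>. (h \<epsilon>)\<^sup>2)" by (rule E_nonneg) simp
    have termm: "E (Suc m) (\<lambda>\<epsilon>. (D m f \<epsilon>)\<^sup>2) = E m (\<lambda>\<epsilon>. (h \<epsilon>)\<^sup>2)"
      unfolding E_Suc D_def h_def by simp
    have termj: "E (Suc m) (\<lambda>\<epsilon>. (D j f \<epsilon>)\<^sup>2) = E m (\<lambda>\<epsilon>. (D j g \<epsilon>)\<^sup>2) + E m (\<lambda>\<epsilon>. (D j h \<epsilon>)\<^sup>2)"
      if "j < m" for j
    proof -
      have jm: "j \<noteq> m" using that by simp
      have a: "D j f \<epsilon> = D j g \<epsilon> - D j h \<epsilon>" if "\<epsilon> \<in> cube m" for \<epsilon>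
      proof -
        have e1: "\<epsilon>(j:=b, m:=False) = \<epsilon>(j:=b)" for b using cube_m[OF that] jm by (auto simp: fun_eq_iff)
        show ?thesis unfolding D_def g_def h_def using e1[of True] e1[of False] by (simp add: field_simps)
      qed
      have b: "D j f (\<epsilon>(m:=True)) = D j g \<epsilon> + D j h \<epsilon>" for \<epsilon>
      proof -
        have e2: "\<epsilon>(m:=True, j:=b) = \<epsilon>(j:=b, m:=True)" for b using jm by (auto simp: fun_eq_iff)
        show ?thesis unfolding D_def g_def h_def using e2[of True] e2[of False] by (simp add: field_simps)
      qed
      have "E (Suc m) (\<lambda>\<epsilon>. (D j f \<epsilon>)\<^sup>2) = (E m (\<lambda>\<epsilon>. (D j g \<epsilon> - D j h \<epsilon>)\<^sup>2) + E m (\<lambda>\<epsilon>. (D j g \<epsilon> + D j h \<epsilon>)\<^sup>2)) / 2"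
        unfolding E_Suc b using a by (simp cong: E_cong)
      also have "\<dots> = E m (\<lambda>\<epsilon>. (D j g \<epsilon>)\<^sup>2 + (D j h \<epsilon>)\<^sup>2)"
        unfolding E_half by (rule E_cong) (simp add: power2_eq_square algebra_simps)
      also have "\<dots> = E m (\<lambda>\<epsilon>. (D j g \<epsilon>)\<^sup>2) + E m (\<lambda>\<epsilon>. (D j h \<epsilon>)\<^sup>2)" by (rule E_add)
      finally show ?thesis .
    qed
    have f2: "E (Suc m) (\<lambda>\<epsilon>. (f \<epsilon>)\<^sup>2) = E m (\<lambda>\<epsilon>. (g \<epsilon>)\<^sup>2) + E m (\<lambda>\<epsilon>. (h \<epsilon>)\<^sup>2)"
      unfolding E_Suc_split[OF gd hd, of "\<lambda>x. x ^ 2"]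
      by (subst E_add[symmetric]) (rule E_cong, simp add: algebra_simps power2_eq_square)
    have f1: "E (Suc m) f = E m g"
      using E_Suc_split[OF gd hd, of "\<lambda>x. x"] by simp
    have "(\<Sum>j<m. E (Suc m) (\<lambda>\<epsilon>. (D j f \<epsilon>)\<^sup>2)) = (\<Sum>j<m. E m (\<lambda>\<epsilon>. (D j g \<epsilon>)\<^sup>2) + E m (\<lambda>\<epsilon>. (D j h \<epsilon>)\<^sup>2))"
      by (rule sum.cong) (simp_all add: termj)
    then have "(\<Sum>j<Suc m. E (Suc m) (\<lambda>\<epsilon>. (D j f \<epsilon>)\<^sup>2))
          = (\<Sum>j<m. E m (\<lambda>\<epsilon>. (D j g \<epsilon>)\<^sup>2)) + (\<Sum>j<m. E m (\<lambda>\<epsilon>. (D j h \<epsilon>)\<^sup>2)) + E m (\<lambda>\<epsilon>. (h \<epsilon>)\<^sup>2)"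
      by (simp add: termm sum.distrib)
    also have "\<dots> \<le> real k * (E m (\<lambda>\<epsilon>. (g \<epsilon>)\<^sup>2) - (E m g)\<^sup>2) + real k' * E m (\<lambda>\<epsilon>. (h \<epsilon>)\<^sup>2) + E m (\<lambda>\<epsilon>. (h \<epsilon>)\<^sup>2)"
    proof -
      have "real k' * (E m (\<lambda>\<epsilon>. (h \<epsilon>)\<^sup>2) - (E m h)\<^sup>2) \<le> real k' * E m (\<lambda>\<epsilon>. (h \<epsilon>)\<^sup>2)"
        by (intro mult_left_mono) auto
      then show ?thesis using IHg IHh by linarith
    qed
    also have "\<dots> = real k * (E (Suc m) (\<lambda>\<epsilon>. (f \<epsilon>)\<^sup>2) - (E (Suc m) f)\<^sup>2)"
      unfolding f2 f1 Suc by (simp add: algebra_simps)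
    finally show ?thesis .
  qed
qed

lemma holder_bonami:
  assumes "deg_le k f"
  shows "E m (\<lambda>\<epsilon>. (f \<epsilon>)\<^sup>2) \<le> 9 ^ k * (E m (\<lambda>\<epsilon>. \<bar>f \<epsilon>\<bar>))\<^sup>2"
proof -
  define P where "P = E m (\<lambda>\<epsilon>. (f \<epsilon>)\<^sup>2)"
  define Q where "Q = E m (\<lambda>\<epsilon>. \<bar>f \<epsilon>\<bar>)"
  define R where "R = E m (\<lambda>\<epsilon>. \<bar>f \<epsilon>\<bar> ^ 3)"
  define F4 where "F4 = E m (\<lambda>\<epsilon>. f \<epsilon> ^ 4)"
  have P0: "P \<ge> 0" unfolding P_def by (rule E_nonneg) simp
  have Q0: "Q \<ge> 0" unfolding Q_def by (rule E_nonneg) simp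
  have R0: "R \<ge> 0" unfolding R_def by (rule E_nonneg) simp
  have "P\<^sup>2 \<le> E m (\<lambda>\<epsilon>. (sqrt \<bar>f \<epsilon>\<bar>)\<^sup>2) * E m (\<lambda>\<epsilon>. (\<bar>f \<epsilon>\<bar> * sqrt \<bar>f \<epsilon>\<bar>)\<^sup>2)"
  proof -
    have "P = E m (\<lambda>\<epsilon>. sqrt \<bar>f \<epsilon>\<bar> * (\<bar>f \<epsilon>\<bar> * sqrt \<bar>f \<epsilon>\<bar>))"
      unfolding P_def by (rule E_cong) (simp add: sqrt_helpers(1))
    then show ?thesis using E_CS by metis
  qed
  also have "\<dots> = Q * R"
    unfolding Q_def R_def sqrt_helpers(2,3) ..
  finally have PQR: "P\<^sup>2 \<le> Q * R" .
  have "R\<^sup>2 \<le> E m (\<lambda>\<epsilon>. (\<bar>f \<epsilon>\<bar>)\<^sup>2) * E m (\<lambda>\<epsilon>. ((f \<epsilon>)\<^sup>2)\<^sup>2)"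
  proof -
    have "R = E m (\<lambda>\<epsilon>. \<bar>f \<epsilon>\<bar> * (f \<epsilon>)\<^sup>2)"
      unfolding R_def by (rule E_cong) (simp add: power2_eq_square power3_eq_cube)
    then show ?thesis using E_CS by metis
  qed
  also have "\<dots> = P * F4" unfolding P_def F4_def by (simp add: power_mult[symmetric])
  finally have RPF: "R\<^sup>2 \<le> P * F4" .
  have F4b: "F4 \<le> 9 ^ k * P\<^sup>2" unfolding F4_def P_def by (rule bonami[OF assms])
  show ?thesis
  proof (cases "P = 0")
    case True then show ?thesis unfolding P_def[symmetric] Q_def[symmetric] by simp
  next
    case False
    then have Pp: "P > 0" using P0 by simp
    have "P ^ 4 = (P\<^sup>2)\<^sup>2" by simp
    also have "\<dots> \<le> (Q * R)\<^sup>2" using PQR P0 by (intro power_mono) auto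
    also have "\<dots> = Q\<^sup>2 * R\<^sup>2" by (simp add: power_mult_distrib)
    also have "\<dots> \<le> Q\<^sup>2 * (P * F4)" using RPF by (intro mult_left_mono) auto
    also have "\<dots> \<le> Q\<^sup>2 * (P * (9 ^ k * P\<^sup>2))" using F4b P0 by (intro mult_left_mono) auto
    finally have A: "P ^ 4 \<le> Q\<^sup>2 * (P * (9 ^ k * P\<^sup>2))" .
    have B: "Q\<^sup>2 * (P * (9 ^ k * P\<^sup>2)) = (9 ^ k * Q\<^sup>2) * P ^ 3"
      by (simp only: power2_eq_square power3_eq_cube mult_ac)
    have C: "P ^ 4 = P * P ^ 3" by (simp only: power4_eq_xxxx power3_eq_cube mult_ac)
    have "P * P ^ 3 \<le> (9 ^ k * Q\<^sup>2) * P ^ 3" using A by (simp only: B C)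
    moreover have "P ^ 3 > 0" using Pp by simp
    ultimately have "P \<le> 9 ^ k * Q\<^sup>2" by (rule mult_right_le_imp_le)
    then show ?thesis unfolding P_def Q_def .
  qed
qed

lemma cube_anticonc:
  assumes "deg_le k f"
  shows "(\<Sum>j<m. E m (\<lambda>\<epsilon>. \<bar>D j f \<epsilon>\<bar>)) \<le> 3 ^ k * sqrt (real k * real m) * E m (\<lambda>\<epsilon>. \<bar>f \<epsilon>\<bar>)"
proof -
  define a where "a j = E m (\<lambda>\<epsilon>. \<bar>D j f \<epsilon>\<bar>)" for j
  have a0: "a j \<ge> 0" for j unfolding a_def by (rule E_nonneg) simp
  have aj: "(a j)\<^sup>2 \<le> E m (\<lambda>\<epsilon>. (D j f \<epsilon>)\<^sup>2)" for j
  proof -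
    have "(a j)\<^sup>2 = (E m (\<lambda>\<epsilon>. 1 * \<bar>D j f \<epsilon>\<bar>))\<^sup>2" unfolding a_def by simp
    also have "\<dots> \<le> E m (\<lambda>\<epsilon>. 1\<^sup>2) * E m (\<lambda>\<epsilon>. \<bar>D j f \<epsilon>\<bar>\<^sup>2)" by (rule E_CS)
    finally show ?thesis by (simp add: E_const)
  qed
  have "(\<Sum>j<m. a j)\<^sup>2 = (\<Sum>j<m. 1 * a j)\<^sup>2" by simp
  also have "\<dots> \<le> (\<Sum>j<m. 1\<^sup>2) * (\<Sum>j<m. (a j)\<^sup>2)" by (rule Cauchy_Schwarz_ineq_sum)
  also have "\<dots> \<le> real m * (\<Sum>j<m. E m (\<lambda>\<epsilon>. (D j f \<epsilon>)\<^sup>2))"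
    by (simp add: sum_mono aj mult_left_mono)
  also have "\<dots> \<le> real m * (real k * (E m (\<lambda>\<epsilon>. (f \<epsilon>)\<^sup>2) - (E m f)\<^sup>2))"
    by (intro mult_left_mono influence[OF assms]) auto
  also have "\<dots> \<le> real m * (real k * E m (\<lambda>\<epsilon>. (f \<epsilon>)\<^sup>2))"
    by (intro mult_left_mono) auto
  also have "\<dots> \<le> real m * (real k * (9 ^ k * (E m (\<lambda>\<epsilon>. \<bar>f \<epsilon>\<bar>))\<^sup>2))"
    by (intro mult_left_mono holder_bonami[OF assms]) auto
  also have "\<dots> = (3 ^ k * sqrt (real k * real m) * E m (\<lambda>\<epsilon>. \<bar>f \<epsilon>\<bar>))\<^sup>2"
  proof -
    have n9: "((3::real) ^ k)\<^sup>2 = 9 ^ k"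
      by (simp only: power_mult[symmetric] mult.commute[of k 2]) (simp add: power_mult)
    have "(3 ^ k * sqrt (real k * real m) * E m (\<lambda>\<epsilon>. \<bar>f \<epsilon>\<bar>))\<^sup>2
        = ((3::real) ^ k)\<^sup>2 * (sqrt (real k * real m))\<^sup>2 * (E m (\<lambda>\<epsilon>. \<bar>f \<epsilon>\<bar>))\<^sup>2"
      by (simp only: power_mult_distrib)
    also have "\<dots> = 9 ^ k * (real k * real m) * (E m (\<lambda>\<epsilon>. \<bar>f \<epsilon>\<bar>))\<^sup>2"
      by (simp only: n9 real_sqrt_pow2 of_nat_0_le_iff mult_nonneg_nonneg)
    finally show ?thesis by (simp only: mult.commute mult.left_commute mult.assoc)
  qed
  finally have "(\<Sum>j<m. a j)\<^sup>2 \<le> (3 ^ k * sqrt (real k * real m) * E m (\<lambda>\<epsilon>. \<bar>f \<epsilon>\<bar>))\<^sup>2" .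
  then have "(\<Sum>j<m. a j) \<le> 3 ^ k * sqrt (real k * real m) * E m (\<lambda>\<epsilon>. \<bar>f \<epsilon>\<bar>)"
    by (rule power2_le_imp_le) (auto intro!: mult_nonneg_nonneg E_nonneg)
  then show ?thesis unfolding a_def .
qed


definition Bij :: "'a set \<Rightarrow> 'b set \<Rightarrow> ('a \<Rightarrow> 'b) set" where
  "Bij A B = {\<pi>. \<pi> \<in> extensional A \<and> bij_betw \<pi> A B}"

definition Fk :: "nat \<Rightarrow> 'a set \<Rightarrow> ('a set \<Rightarrow> real) \<Rightarrow> ('a set \<Rightarrow> real) \<Rightarrow> ('a \<Rightarrow> 'a) \<Rightarrow> real" where
  "Fk k A w u \<pi> = (\<Sum>e\<in>ksets A k. w e * u (\<pi> ` e))"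

definition Pairs :: "'a set \<Rightarrow> ('a \<times> 'a) set" where
  "Pairs A = {(x,y). x \<in> A \<and> y \<in> A \<and> x \<noteq> y}"

lemma finite_Pairs: "finite A \<Longrightarrow> finite (Pairs A)"
proof -
  assume "finite A"
  then have "finite (A \<times> A)" by simp
  moreover have "Pairs A \<subseteq> A \<times> A" by (auto simp: Pairs_def)
  ultimately show ?thesis by (rule finite_subset[rotated])
qed

lemma card_Pairs: "finite A \<Longrightarrow> card (Pairs A) = card A * (card A - 1)"
proof -
  assume fA: "finite A"
  have "Pairs A = (A \<times> A) - (\<lambda>x. (x,x)) ` A" by (auto simp: Pairs_def)
  moreover have "card ((A \<times> A) - (\<lambda>x. (x,x)) ` A) = card A * card A - card A"
  proof -
    have "card ((\<lambda>x. (x,x)) ` A) = card A" by (rule card_image) (auto simp: inj_on_def)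
    moreover have "(\<lambda>x. (x,x)) ` A \<subseteq> A \<times> A" by auto
    ultimately show ?thesis using fA by (simp add: card_Diff_subset card_cartesian_product)
  qed
  ultimately show ?thesis by (simp add: diff_mult_distrib2)
qed

lemma Bij_sub: "Bij A B \<subseteq> PiE A (\<lambda>_. B)"
  unfolding Bij_def by (auto simp: bij_betw_def PiE_def)

lemma finite_Bij: "finite A \<Longrightarrow> finite B \<Longrightarrow> finite (Bij A B)"
  using Bij_sub finite_PiE by (metis finite_subset)

lemma card_Bij:
  assumes fA: "finite A" and fB: "finite B" and c: "card A = card B"
  shows "card (Bij A B) = fact (card A)"
proof -
  obtain \<beta> where \<beta>: "bij_betw \<beta> A B" using finite_same_card_bij[OF fA fB c] by blast
  define \<Phi> where "\<Phi> p = restrict (\<beta> \<circ> p) A" for p :: "'a \<Rightarrow> 'a"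
  define \<Psi> where "\<Psi> \<pi> = (\<lambda>z. if z \<in> A then inv_into A \<beta> (\<pi> z) else z)" for \<pi> :: "'a \<Rightarrow> 'b"
  have "bij_betw \<Phi> {p. p permutes A} (Bij A B)"
  proof (rule bij_betw_byWitness[where f'=\<Psi>])
    show "\<forall>p\<in>{p. p permutes A}. \<Psi> (\<Phi> p) = p"
    proof
      fix p assume "p \<in> {p. p permutes A}"
      then have p: "p permutes A" by simp
      show "\<Psi> (\<Phi> p) = p"
      proof
        fix z show "\<Psi> (\<Phi> p) z = p z"
        proof (cases "z \<in> A")
          case True
          then have "p z \<in> A" using permutes_in_image[OF p] by simp
          then show ?thesis using True \<beta> unfolding \<Psi>_def \<Phi>_def
            by (simp add: bij_betw_def inv_into_f_f)
        next
          case False then show ?thesis using permutes_not_in[OF p] unfolding \<Psi>_def by simp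
        qed
      qed
    qed
    show "\<forall>\<pi>\<in>Bij A B. \<Phi> (\<Psi> \<pi>) = \<pi>"
    proof
      fix \<pi> assume "\<pi> \<in> Bij A B"
      then have e: "\<pi> \<in> extensional A" and b: "bij_betw \<pi> A B" by (auto simp: Bij_def)
      show "\<Phi> (\<Psi> \<pi>) = \<pi>"
      proof
        fix z show "\<Phi> (\<Psi> \<pi>) z = \<pi> z"
        proof (cases "z \<in> A")
          case True
          then have "\<pi> z \<in> B" using b by (auto simp: bij_betw_def)
          then have "\<pi> z \<in> \<beta> ` A" using \<beta> by (simp add: bij_betw_def)
          then show ?thesis using True unfolding \<Psi>_def \<Phi>_def by (simp add: f_inv_into_f)
        next
          case False then show ?thesis using e unfolding \<Phi>_def by (simp add: extensional_def)
        qed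
      qed
    qed
    show "\<Phi> ` {p. p permutes A} \<subseteq> Bij A B"
    proof
      fix \<pi> assume "\<pi> \<in> \<Phi> ` {p. p permutes A}"
      then obtain p where p: "p permutes A" and pi: "\<pi> = \<Phi> p" by auto
      have "bij_betw (\<beta> \<circ> p) A B" using bij_betw_trans[OF permutes_imp_bij[OF p] \<beta>] .
      then have "bij_betw \<pi> A B" unfolding pi \<Phi>_def by (rule bij_betw_cong[THEN iffD1, rotated]) simp
      then show "\<pi> \<in> Bij A B" unfolding Bij_def pi \<Phi>_def by simp
    qed
    show "\<Psi> ` Bij A B \<subseteq> {p. p permutes A}"
    proof
      fix p assume "p \<in> \<Psi> ` Bij A B"
      then obtain \<pi> where pi: "\<pi> \<in> Bij A B" and p: "p = \<Psi> \<pi>" by auto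
      have b: "bij_betw \<pi> A B" using pi by (simp add: Bij_def)
      have "bij_betw (inv_into A \<beta> \<circ> \<pi>) A A" using bij_betw_trans[OF b bij_betw_inv_into[OF \<beta>]] .
      then have "bij_betw p A A" unfolding p \<Psi>_def by (rule bij_betw_cong[THEN iffD1, rotated]) simp
      moreover have "\<And>x. x \<notin> A \<Longrightarrow> p x = x" unfolding p \<Psi>_def by simp
      ultimately show "p \<in> {p. p permutes A}" by (simp add: bij_imp_permutes)
    qed
  qed
  then have "card (Bij A B) = card {p. p permutes A}" by (simp add: bij_betw_same_card)
  also have "\<dots> = fact (card A)" using card_permutations[OF refl fA] .
  finally show ?thesis .
qed

lemma Fk_cong: "(\<And>z. z \<in> A \<Longrightarrow> \<pi> z = \<pi>' z) \<Longrightarrow> Fk k A w u \<pi> = Fk k A w u \<pi>'"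
  unfolding Fk_def ksets_def
  by (intro sum.cong refl arg_cong2[where f="(*)"] arg_cong[where f=u] image_cong) auto

lemma Bij_left:
  assumes \<rho>: "bij_betw \<rho> B B"
  shows "bij_betw (\<lambda>\<pi>. restrict (\<rho> \<circ> \<pi>) A) (Bij A B) (Bij A B)"
proof (rule bij_betw_byWitness[where f'="\<lambda>\<pi>. restrict (inv_into B \<rho> \<circ> \<pi>) A"])
  have inj: "inj_on \<rho> B" using \<rho> by (simp add: bij_betw_def)
  show "\<forall>\<pi>\<in>Bij A B. restrict (inv_into B \<rho> \<circ> restrict (\<rho> \<circ> \<pi>) A) A = \<pi>"
  proof
    fix \<pi> assume "\<pi> \<in> Bij A B"
    then have e: "\<pi> \<in> extensional A" and b: "bij_betw \<pi> A B" by (auto simp: Bij_def)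
    show "restrict (inv_into B \<rho> \<circ> restrict (\<rho> \<circ> \<pi>) A) A = \<pi>"
    proof
      fix z show "restrict (inv_into B \<rho> \<circ> restrict (\<rho> \<circ> \<pi>) A) A z = \<pi> z"
        using e b inj by (cases "z \<in> A") (auto simp: extensional_def bij_betw_def inv_into_f_f)
    qed
  qed
  show "\<forall>\<pi>\<in>Bij A B. restrict (\<rho> \<circ> restrict (inv_into B \<rho> \<circ> \<pi>) A) A = \<pi>"
  proof
    fix \<pi> assume "\<pi> \<in> Bij A B"
    then have e: "\<pi> \<in> extensional A" and b: "bij_betw \<pi> A B" by (auto simp: Bij_def)
    show "restrict (\<rho> \<circ> restrict (inv_into B \<rho> \<circ> \<pi>) A) A = \<pi>"
    proof
      fix z show "restrict (\<rho> \<circ> restrict (inv_into B \<rho> \<circ> \<pi>) A) A z = \<pi> z"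
      proof (cases "z \<in> A")
        case True
        then have "\<pi> z \<in> \<rho> ` B" using b \<rho> by (auto simp: bij_betw_def)
        then show ?thesis using True by (simp add: f_inv_into_f)
      next
        case False then show ?thesis using e by (simp add: extensional_def)
      qed
    qed
  qed
  show "(\<lambda>\<pi>. restrict (\<rho> \<circ> \<pi>) A) ` Bij A B \<subseteq> Bij A B"
  proof
    fix \<sigma> assume "\<sigma> \<in> (\<lambda>\<pi>. restrict (\<rho> \<circ> \<pi>) A) ` Bij A B"
    then obtain \<pi> where pi: "\<pi> \<in> Bij A B" and s: "\<sigma> = restrict (\<rho> \<circ> \<pi>) A" by auto
    have "bij_betw (\<rho> \<circ> \<pi>) A B" using bij_betw_trans[of \<pi> A B \<rho> B] pi \<rho> by (simp add: Bij_def)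
    then have "bij_betw \<sigma> A B" unfolding s by (rule bij_betw_cong[THEN iffD1, rotated]) simp
    then show "\<sigma> \<in> Bij A B" unfolding Bij_def s by simp
  qed
  show "(\<lambda>\<pi>. restrict (inv_into B \<rho> \<circ> \<pi>) A) ` Bij A B \<subseteq> Bij A B"
  proof
    fix \<sigma> assume "\<sigma> \<in> (\<lambda>\<pi>. restrict (inv_into B \<rho> \<circ> \<pi>) A) ` Bij A B"
    then obtain \<pi> where pi: "\<pi> \<in> Bij A B" and s: "\<sigma> = restrict (inv_into B \<rho> \<circ> \<pi>) A" by auto
    have "bij_betw (inv_into B \<rho> \<circ> \<pi>) A B"
      using bij_betw_trans[of \<pi> A B "inv_into B \<rho>" B] pi bij_betw_inv_into[OF \<rho>] by (simp add: Bij_def)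
    then have "bij_betw \<sigma> A B" unfolding s by (rule bij_betw_cong[THEN iffD1, rotated]) simp
    then show "\<sigma> \<in> Bij A B" unfolding Bij_def s by simp
  qed
qed

lemma sum_Bij_left:
  assumes "bij_betw \<rho> B B"
  shows "(\<Sum>\<pi>\<in>Bij A B. G (restrict (\<rho> \<circ> \<pi>) A)) = (\<Sum>\<pi>\<in>Bij A B. G \<pi>)"
  using sum.reindex_bij_betw[OF Bij_left[OF assms, of A], of G] .

lemma Bij_right:
  assumes \<rho>: "bij_betw \<rho> A A"
  shows "bij_betw (\<lambda>\<pi>. restrict (\<pi> \<circ> \<rho>) A) (Bij A B) (Bij A B)"
proof (rule bij_betw_byWitness[where f'="\<lambda>\<pi>. restrict (\<pi> \<circ> inv_into A \<rho>) A"])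
  have inj: "inj_on \<rho> A" using \<rho> by (simp add: bij_betw_def)
  have r1: "\<rho> z \<in> A" if "z \<in> A" for z using \<rho> that by (auto simp: bij_betw_def)
  have r2: "inv_into A \<rho> z \<in> A" if "z \<in> A" for z
    using bij_betw_inv_into[OF \<rho>] that by (auto simp: bij_betw_def)
  have r3: "\<rho> (inv_into A \<rho> z) = z" if "z \<in> A" for z
    using \<rho> that by (simp add: bij_betw_def f_inv_into_f)
  have r4: "inv_into A \<rho> (\<rho> z) = z" if "z \<in> A" for z
    using inj that by (simp add: inv_into_f_f)
  show "\<forall>\<pi>\<in>Bij A B. restrict (restrict (\<pi> \<circ> \<rho>) A \<circ> inv_into A \<rho>) A = \<pi>"
  proof
    fix \<pi> assume "\<pi> \<in> Bij A B"
    then have e: "\<pi> \<in> extensional A" by (auto simp: Bij_def)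
    show "restrict (restrict (\<pi> \<circ> \<rho>) A \<circ> inv_into A \<rho>) A = \<pi>"
    proof
      fix z show "restrict (restrict (\<pi> \<circ> \<rho>) A \<circ> inv_into A \<rho>) A z = \<pi> z"
        using e r2 r3 by (cases "z \<in> A") (auto simp: extensional_def)
    qed
  qed
  show "\<forall>\<pi>\<in>Bij A B. restrict (restrict (\<pi> \<circ> inv_into A \<rho>) A \<circ> \<rho>) A = \<pi>"
  proof
    fix \<pi> assume "\<pi> \<in> Bij A B"
    then have e: "\<pi> \<in> extensional A" by (auto simp: Bij_def)
    show "restrict (restrict (\<pi> \<circ> inv_into A \<rho>) A \<circ> \<rho>) A = \<pi>"
    proof
      fix z show "restrict (restrict (\<pi> \<circ> inv_into A \<rho>) A \<circ> \<rho>) A z = \<pi> z"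
        using e r1 r4 by (cases "z \<in> A") (auto simp: extensional_def)
    qed
  qed
  show "(\<lambda>\<pi>. restrict (\<pi> \<circ> \<rho>) A) ` Bij A B \<subseteq> Bij A B"
  proof
    fix \<sigma> assume "\<sigma> \<in> (\<lambda>\<pi>. restrict (\<pi> \<circ> \<rho>) A) ` Bij A B"
    then obtain \<pi> where pi: "\<pi> \<in> Bij A B" and s: "\<sigma> = restrict (\<pi> \<circ> \<rho>) A" by auto
    have "bij_betw (\<pi> \<circ> \<rho>) A B" using bij_betw_trans[OF \<rho>, of \<pi> B] pi by (simp add: Bij_def)
    then have "bij_betw \<sigma> A B" unfolding s by (rule bij_betw_cong[THEN iffD1, rotated]) simp
    then show "\<sigma> \<in> Bij A B" unfolding Bij_def s by simp
  qed
  show "(\<lambda>\<pi>. restrict (\<pi> \<circ> inv_into A \<rho>) A) ` Bij A B \<subseteq> Bij A B"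
  proof
    fix \<sigma> assume "\<sigma> \<in> (\<lambda>\<pi>. restrict (\<pi> \<circ> inv_into A \<rho>) A) ` Bij A B"
    then obtain \<pi> where pi: "\<pi> \<in> Bij A B" and s: "\<sigma> = restrict (\<pi> \<circ> inv_into A \<rho>) A" by auto
    have "bij_betw (\<pi> \<circ> inv_into A \<rho>) A B"
      using bij_betw_trans[OF bij_betw_inv_into[OF \<rho>], of \<pi> B] pi by (simp add: Bij_def)
    then have "bij_betw \<sigma> A B" unfolding s by (rule bij_betw_cong[THEN iffD1, rotated]) simp
    then show "\<sigma> \<in> Bij A B" unfolding Bij_def s by simp
  qed
qed

lemma sum_Bij_right:
  assumes "bij_betw \<rho> A A"
  shows "(\<Sum>\<pi>\<in>Bij A B. G (restrict (\<pi> \<circ> \<rho>) A)) = (\<Sum>\<pi>\<in>Bij A B. G \<pi>)"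
  using sum.reindex_bij_betw[OF Bij_right[OF assms, of B], of G] .

lemma ksets_image_bij:
  assumes b: "bij_betw \<pi> A B"
  shows "bij_betw (image \<pi>) (ksets A k) (ksets B k)"
proof -
  have inj: "inj_on \<pi> A" using b by (simp add: bij_betw_def)
  have P: "bij_betw (image \<pi>) (Pow A) (Pow B)" using bij_betw_Pow[OF b] .
  have "inj_on (image \<pi>) (ksets A k)"
    using P by (rule bij_betw_imp_inj_on[THEN inj_on_subset]) (auto simp: ksets_def)
  moreover have "image \<pi> ` ksets A k = ksets B k"
  proof (intro equalityI subsetI)
    fix f assume "f \<in> image \<pi> ` ksets A k"
    then obtain e where e: "e \<subseteq> A" "card e = k" and f: "f = \<pi> ` e" by (auto simp: ksets_def)
    have "card f = k" unfolding f using e inj by (simp add: card_image inj_on_subset)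
    moreover have "f \<subseteq> B" using e b f by (auto simp: bij_betw_def)
    ultimately show "f \<in> ksets B k" by (simp add: ksets_def)
  next
    fix f assume "f \<in> ksets B k"
    then have f: "f \<subseteq> B" "card f = k" by (auto simp: ksets_def)
    then have "f \<in> Pow B" by simp
    then have "f \<in> image \<pi> ` Pow A" using P by (simp add: bij_betw_def)
    then obtain e where e: "e \<in> Pow A" "f = \<pi> ` e" by blast
    have "card e = k" using e f inj by (metis PowD card_image inj_on_subset)
    then show "f \<in> image \<pi> ` ksets A k" using e by (auto simp: ksets_def)
  qed
  ultimately show ?thesis by (simp add: bij_betw_def)
qed

lemma card_ksets: "finite A \<Longrightarrow> card (ksets A k) = card A choose k"
  unfolding ksets_def by (rule n_subsets)

lemma finite_ksets: "finite A \<Longrightarrow> finite (ksets A k)"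
  unfolding ksets_def by (rule finite_subset[of _ "Pow A"]) auto


lemma sum_Fk:
  assumes fA: "finite A" and fB: "finite B" and cA: "card A = n" and cB: "card B = n" and kn: "k \<le> n"
  shows "(\<Sum>\<pi>\<in>Bij A B. Fk k A w u \<pi>) = fact n / real (n choose k) * (\<Sum>e\<in>ksets A k. w e) * (\<Sum>f\<in>ksets B k. u f)"
proof -
  define c where "c e = (\<Sum>\<pi>\<in>Bij A B. u (\<pi> ` e))" for e
  have const: "c e' = c e" if e: "e \<in> ksets A k" and e': "e' \<in> ksets A k" for e e'
  proof -
    have eA: "e \<subseteq> A" "card e = k" and e'A: "e' \<subseteq> A" "card e' = k" using e e' by (auto simp: ksets_def)
    have fe: "finite e" "finite e'" using eA e'A fA finite_subset by auto
    obtain \<rho>1 where r1: "bij_betw \<rho>1 e e'" using finite_same_card_bij[OF fe] eA e'A by auto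
    have "card (A - e) = card (A - e')" using eA e'A fe fA by (simp add: card_Diff_subset)
    then obtain \<rho>2 where r2: "bij_betw \<rho>2 (A - e) (A - e')"
      using finite_same_card_bij[of "A - e" "A - e'"] fA by auto
    define \<rho> where "\<rho> z = (if z \<in> e then \<rho>1 z else \<rho>2 z)" for z
    have b1: "bij_betw \<rho> e e'" using r1 by (rule bij_betw_cong[THEN iffD1, rotated]) (simp add: \<rho>_def)
    have b2: "bij_betw \<rho> (A - e) (A - e')" using r2 by (rule bij_betw_cong[THEN iffD1, rotated]) (simp add: \<rho>_def)
    have "bij_betw \<rho> (e \<union> (A - e)) (e' \<union> (A - e'))" by (rule bij_betw_combine[OF b1 b2]) auto
    moreover have "e \<union> (A - e) = A" "e' \<union> (A - e') = A" using eA e'A by auto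
    ultimately have \<rho>: "bij_betw \<rho> A A" by simp
    have img: "\<rho> ` e = e'" using b1 by (simp add: bij_betw_def)
    have "c e' = (\<Sum>\<pi>\<in>Bij A B. u (restrict (\<pi> \<circ> \<rho>) A ` e))"
    proof -
      have eqs: "restrict (\<pi> \<circ> \<rho>) A ` e = \<pi> ` e'" for \<pi> :: "'a \<Rightarrow> 'b"
      proof -
        have "restrict (\<pi> \<circ> \<rho>) A ` e = (\<pi> \<circ> \<rho>) ` e" using eA by (intro image_cong) auto
        also have "\<dots> = \<pi> ` (\<rho> ` e)" by (rule image_comp[symmetric])
        finally show ?thesis unfolding img .
      qed
      show ?thesis unfolding c_def by (simp only: eqs)
    qed
    also have "\<dots> = c e" unfolding c_def by (rule sum_Bij_right[OF \<rho>])
    finally show ?thesis .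
  qed
  have total: "(\<Sum>e\<in>ksets A k. c e) = fact n * (\<Sum>f\<in>ksets B k. u f)"
  proof -
    have "(\<Sum>e\<in>ksets A k. c e) = (\<Sum>\<pi>\<in>Bij A B. \<Sum>e\<in>ksets A k. u (\<pi> ` e))"
      unfolding c_def by (rule sum.swap)
    also have "\<dots> = (\<Sum>\<pi>\<in>Bij A B. \<Sum>f\<in>ksets B k. u f)"
    proof (rule sum.cong[OF refl])
      fix \<pi> assume "\<pi> \<in> Bij A B"
      then have "bij_betw \<pi> A B" by (simp add: Bij_def)
      then show "(\<Sum>e\<in>ksets A k. u (\<pi> ` e)) = (\<Sum>f\<in>ksets B k. u f)"
        by (rule sum.reindex_bij_betw[OF ksets_image_bij])
    qed
    also have "\<dots> = real (card (Bij A B)) * (\<Sum>f\<in>ksets B k. u f)" by simp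
    also have "\<dots> = fact n * (\<Sum>f\<in>ksets B k. u f)" using card_Bij[OF fA fB] cA cB by simp
    finally show ?thesis .
  qed
  have cK: "card (ksets A k) = n choose k" using card_ksets[OF fA] cA by simp
  then have "ksets A k \<noteq> {}" using kn by (metis card.empty zero_less_binomial_iff less_irrefl)
  then obtain e0 where e0: "e0 \<in> ksets A k" by blast
  have "(\<Sum>e\<in>ksets A k. c e) = real (n choose k) * c e0"
    using const[OF e0] cK by simp
  then have ce0: "c e0 = fact n * (\<Sum>f\<in>ksets B k. u f) / real (n choose k)"
    using total kn by (simp add: field_simps)
  have "(\<Sum>\<pi>\<in>Bij A B. Fk k A w u \<pi>) = (\<Sum>e\<in>ksets A k. w e * c e)"
    unfolding Fk_def c_def by (subst sum.swap) (simp add: sum_distrib_left)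
  also have "\<dots> = (\<Sum>e\<in>ksets A k. w e * c e0)" using const[OF e0] by simp
  also have "\<dots> = (\<Sum>e\<in>ksets A k. w e) * c e0" by (simp add: sum_distrib_right)
  also have "\<dots> = fact n / real (n choose k) * (\<Sum>e\<in>ksets A k. w e) * (\<Sum>f\<in>ksets B k. u f)"
    unfolding ce0 by simp
  finally show ?thesis .
qed

lemma insert_ksets_bij:
  assumes fA: "finite A" and c: "c \<in> A" and d: "d \<in> A" and cd: "c \<noteq> d" and k: "k \<ge> 1"
  shows "bij_betw (insert c) (ksets (A - {c,d}) (k - 1)) {e \<in> ksets A k. c \<in> e \<and> d \<notin> e}"
proof (rule bij_betw_byWitness[where f'="\<lambda>e. e - {c}"])
  show "\<forall>g\<in>ksets (A - {c, d}) (k - 1). insert c g - {c} = g" by (auto simp: ksets_def)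
  show "\<forall>e\<in>{e \<in> ksets A k. c \<in> e \<and> d \<notin> e}. insert c (e - {c}) = e" by auto
  show "insert c ` ksets (A - {c, d}) (k - 1) \<subseteq> {e \<in> ksets A k. c \<in> e \<and> d \<notin> e}"
  proof
    fix e assume "e \<in> insert c ` ksets (A - {c, d}) (k - 1)"
    then obtain g where g: "g \<subseteq> A - {c,d}" "card g = k - 1" and e: "e = insert c g" by (auto simp: ksets_def)
    have "finite g" using g fA finite_subset by blast
    moreover have "c \<notin> g" using g by auto
    ultimately have "card e = k" using g e k by simp
    then show "e \<in> {e \<in> ksets A k. c \<in> e \<and> d \<notin> e}" using g e c cd by (auto simp: ksets_def)
  qed
  show "(\<lambda>e. e - {c}) ` {e \<in> ksets A k. c \<in> e \<and> d \<notin> e} \<subseteq> ksets (A - {c, d}) (k - 1)"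
  proof
    fix g assume "g \<in> (\<lambda>e. e - {c}) ` {e \<in> ksets A k. c \<in> e \<and> d \<notin> e}"
    then obtain e where e: "e \<subseteq> A" "card e = k" "c \<in> e" "d \<notin> e" and g: "g = e - {c}" by (auto simp: ksets_def)
    have "finite e" using e fA finite_subset by blast
    then have "card g = k - 1" using e g by simp
    then show "g \<in> ksets (A - {c, d}) (k - 1)" using e g by (auto simp: ksets_def)
  qed
qed

lemma Fk_diff:
  assumes fA: "finite A" and b: "bij_betw \<pi> A B" and a: "a \<in> A" and bb: "b \<in> A" and ab: "a \<noteq> b"
      and x: "\<pi> a = x" and y: "\<pi> b = y" and k: "k \<ge> 1"
  shows "Fk k A w u \<pi> - Fk k A w u (Transposition.transpose x y \<circ> \<pi>) =
         Fk (k - 1) (A - {a,b}) (\<lambda>e. w (insert a e) - w (insert b e)) (\<lambda>e. u (insert x e) - u (insert y e)) \<pi>"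
proof -
  let ?T = "Transposition.transpose x y"
  let ?K = "ksets A k"
  let ?K' = "ksets (A - {a,b}) (k - 1)"
  define \<phi> where "\<phi> e = w e * (u (\<pi> ` e) - u (?T ` \<pi> ` e))" for e
  have inj: "inj_on \<pi> A" using b by (simp add: bij_betw_def)
  have xy: "x \<noteq> y" using inj a bb ab x y by (auto simp: inj_on_def)
  have mem: "\<pi> z \<in> \<pi> ` e \<longleftrightarrow> z \<in> e" if "e \<subseteq> A" "z \<in> A" for e z
    using inj that by (auto simp: inj_on_def)
  have "Fk k A w u \<pi> - Fk k A w u (?T \<circ> \<pi>) = (\<Sum>e\<in>?K. \<phi> e)"
    unfolding Fk_def \<phi>_def by (simp add: sum_subtractf[symmetric] right_diff_distrib image_comp)
  also have "\<dots> = (\<Sum>e\<in>{e\<in>?K. a \<in> e \<and> b \<notin> e}. \<phi> e) + (\<Sum>e\<in>{e\<in>?K. b \<in> e \<and> a \<notin> e}. \<phi> e)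
                 + (\<Sum>e\<in>{e\<in>?K. (a \<in> e \<longleftrightarrow> b \<in> e)}. \<phi> e)"
  proof -
    have fK: "finite ?K" using finite_ksets[OF fA] .
    have "?K = {e\<in>?K. a \<in> e \<and> b \<notin> e} \<union> {e\<in>?K. b \<in> e \<and> a \<notin> e} \<union> {e\<in>?K. (a \<in> e \<longleftrightarrow> b \<in> e)}" by blast
    then have "(\<Sum>e\<in>?K. \<phi> e) = (\<Sum>e\<in>{e\<in>?K. a \<in> e \<and> b \<notin> e} \<union> {e\<in>?K. b \<in> e \<and> a \<notin> e} \<union> {e\<in>?K. (a \<in> e \<longleftrightarrow> b \<in> e)}. \<phi> e)"
      by simp
    also have "\<dots> = (\<Sum>e\<in>{e\<in>?K. a \<in> e \<and> b \<notin> e} \<union> {e\<in>?K. b \<in> e \<and> a \<notin> e}. \<phi> e) + (\<Sum>e\<in>{e\<in>?K. (a \<in> e \<longleftrightarrow> b \<in> e)}. \<phi> e)"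
      by (rule sum.union_disjoint) (use fK in auto)
    also have "(\<Sum>e\<in>{e\<in>?K. a \<in> e \<and> b \<notin> e} \<union> {e\<in>?K. b \<in> e \<and> a \<notin> e}. \<phi> e) = (\<Sum>e\<in>{e\<in>?K. a \<in> e \<and> b \<notin> e}. \<phi> e) + (\<Sum>e\<in>{e\<in>?K. b \<in> e \<and> a \<notin> e}. \<phi> e)"
      by (rule sum.union_disjoint) (use fK in auto)
    finally show ?thesis .
  qed
  also have "(\<Sum>e\<in>{e\<in>?K. (a \<in> e \<longleftrightarrow> b \<in> e)}. \<phi> e) = 0"
  proof (rule sum.neutral, rule ballI)
    fix e assume "e \<in> {e\<in>?K. (a \<in> e \<longleftrightarrow> b \<in> e)}"
    then have e: "e \<subseteq> A" "a \<in> e \<longleftrightarrow> b \<in> e" by (auto simp: ksets_def)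
    then have "x \<in> \<pi> ` e \<longleftrightarrow> y \<in> \<pi> ` e" using mem[OF e(1) a] mem[OF e(1) bb] x y by simp
    then have "?T ` \<pi> ` e = \<pi> ` e" by simp
    then show "\<phi> e = 0" unfolding \<phi>_def by simp
  qed
  also have "(\<Sum>e\<in>{e\<in>?K. a \<in> e \<and> b \<notin> e}. \<phi> e) = (\<Sum>g\<in>?K'. \<phi> (insert a g))"
    by (rule sum.reindex_bij_betw[OF insert_ksets_bij[OF fA a bb ab k], symmetric])
  also have "(\<Sum>e\<in>{e\<in>?K. b \<in> e \<and> a \<notin> e}. \<phi> e) = (\<Sum>g\<in>?K'. \<phi> (insert b g))"
  proof -
    have "{b, a} = {a, b}" by auto
    then show ?thesis
      using sum.reindex_bij_betw[OF insert_ksets_bij[OF fA bb a ab[symmetric] k], symmetric, of \<phi>] by simp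
  qed
  also have "(\<Sum>g\<in>?K'. \<phi> (insert a g)) + (\<Sum>g\<in>?K'. \<phi> (insert b g)) + 0 =
      (\<Sum>g\<in>?K'. (w (insert a g) - w (insert b g)) * (u (insert x (\<pi> ` g)) - u (insert y (\<pi> ` g))))"
  proof -
    have "\<phi> (insert a g) + \<phi> (insert b g) = (w (insert a g) - w (insert b g)) * (u (insert x (\<pi> ` g)) - u (insert y (\<pi> ` g)))"
      if g: "g \<in> ?K'" for g
    proof -
      have gA: "g \<subseteq> A - {a,b}" using g by (auto simp: ksets_def)
      have nx: "x \<notin> \<pi> ` g" and ny: "y \<notin> \<pi> ` g"
        using mem[of g a] mem[of g b] gA a bb x y by auto
      have Tg: "?T ` \<pi> ` g = \<pi> ` g" using nx ny by simp
      have T1: "?T ` \<pi> ` insert a g = insert y (\<pi> ` g)" using Tg x by (simp add: image_insert)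
      have T2: "?T ` \<pi> ` insert b g = insert x (\<pi> ` g)" using Tg y by (simp add: image_insert)
      show ?thesis unfolding \<phi>_def T1 T2 using x y by (simp add: algebra_simps)
    qed
    then show ?thesis by (simp add: sum.distrib[symmetric])
  qed
  also have "\<dots> = Fk (k - 1) (A - {a,b}) (\<lambda>e. w (insert a e) - w (insert b e)) (\<lambda>e. u (insert x e) - u (insert y e)) \<pi>"
    unfolding Fk_def ..
  finally show ?thesis .
qed


definition ext2 :: "'a \<Rightarrow> 'a \<Rightarrow> 'b \<Rightarrow> 'b \<Rightarrow> ('a \<Rightarrow> 'b) \<Rightarrow> 'a set \<Rightarrow> 'a \<Rightarrow> 'b" where
  "ext2 a b x y \<sigma> A = restrict (\<lambda>z. if z = a then x else if z = b then y else \<sigma> z) A"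

lemma ext2_a: "a \<in> A \<Longrightarrow> ext2 a b x y \<sigma> A a = x"
  by (simp add: ext2_def)

lemma ext2_b: "b \<in> A \<Longrightarrow> a \<noteq> b \<Longrightarrow> ext2 a b x y \<sigma> A b = y"
  by (simp add: ext2_def)

lemma ext2_other: "z \<in> A - {a,b} \<Longrightarrow> ext2 a b x y \<sigma> A z = \<sigma> z"
  by (simp add: ext2_def)

lemma ext2_Bij:
  assumes a: "a \<in> A" and b: "b \<in> A" and ab: "a \<noteq> b" and x: "x \<in> B" and y: "y \<in> B" and xy: "x \<noteq> y"
      and s: "\<sigma> \<in> Bij (A - {a,b}) (B - {x,y})"
  shows "ext2 a b x y \<sigma> A \<in> Bij A B"
proof -
  let ?f = "ext2 a b x y \<sigma> A"
  have sb: "bij_betw \<sigma> (A - {a,b}) (B - {x,y})" using s by (simp add: Bij_def)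
  have b1: "bij_betw ?f {a} {x}" using a by (simp add: ext2_a bij_betw_def)
  have b2: "bij_betw ?f {b} {y}" using b ab by (simp add: ext2_b bij_betw_def)
  have b3: "bij_betw ?f (A - {a,b}) (B - {x,y})"
    using sb by (rule bij_betw_cong[THEN iffD1, rotated]) (simp add: ext2_other)
  have "bij_betw ?f ({a} \<union> {b}) ({x} \<union> {y})" by (rule bij_betw_combine[OF b1 b2]) (use xy in auto)
  then have "bij_betw ?f (({a} \<union> {b}) \<union> (A - {a,b})) (({x} \<union> {y}) \<union> (B - {x,y}))"
    by (rule bij_betw_combine[OF _ b3]) auto
  moreover have "({a} \<union> {b}) \<union> (A - {a,b}) = A" "({x} \<union> {y}) \<union> (B - {x,y}) = B" using a b x y by auto
  ultimately have "bij_betw ?f A B" by simp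
  moreover have "?f \<in> extensional A" by (simp add: ext2_def)
  ultimately show ?thesis by (simp add: Bij_def)
qed

lemma Bij_decomp:
  assumes pi: "\<pi> \<in> Bij A B" and a: "a \<in> A" and b: "b \<in> A" and ab: "a \<noteq> b"
  shows "restrict \<pi> (A - {a,b}) \<in> Bij (A - {a,b}) (B - {\<pi> a, \<pi> b})"
    and "ext2 a b (\<pi> a) (\<pi> b) (restrict \<pi> (A - {a,b})) A = \<pi>"
proof -
  have e: "\<pi> \<in> extensional A" and bij: "bij_betw \<pi> A B" using pi by (auto simp: Bij_def)
  have inj: "inj_on \<pi> A" using bij by (simp add: bij_betw_def)
  have sub: "{a,b} \<subseteq> A" using a b by simp
  have "\<pi> ` (A - {a,b}) = \<pi> ` A - \<pi> ` {a,b}" by (rule inj_on_image_set_diff[OF inj Diff_subset sub])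
  also have "\<dots> = B - {\<pi> a, \<pi> b}" using bij by (simp add: bij_betw_def)
  finally have im: "\<pi> ` (A - {a,b}) = B - {\<pi> a, \<pi> b}" .
  have "bij_betw \<pi> (A - {a,b}) (B - {\<pi> a, \<pi> b})" by (rule bij_betw_subset[OF bij Diff_subset im])
  then have "bij_betw (restrict \<pi> (A - {a,b})) (A - {a,b}) (B - {\<pi> a, \<pi> b})"
    by (rule bij_betw_cong[THEN iffD1, rotated]) simp
  then show "restrict \<pi> (A - {a,b}) \<in> Bij (A - {a,b}) (B - {\<pi> a, \<pi> b})" by (simp add: Bij_def)
  show "ext2 a b (\<pi> a) (\<pi> b) (restrict \<pi> (A - {a,b})) A = \<pi>"
  proof
    fix z show "ext2 a b (\<pi> a) (\<pi> b) (restrict \<pi> (A - {a,b})) A z = \<pi> z"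
    proof (cases "z \<in> A")
      case True
      show ?thesis
      proof (cases "z = a")
        case True then show ?thesis using a by (simp add: ext2_a)
      next
        case False
        show ?thesis
        proof (cases "z = b")
          case True then show ?thesis using b ab by (simp add: ext2_b)
        next
          case False
          then have "z \<in> A - {a,b}" using \<open>z \<in> A\<close> \<open>z \<noteq> a\<close> by simp
          then show ?thesis by (simp add: ext2_other)
        qed
      qed
    next
      case False
      then have "\<pi> z = undefined" using e by (simp add: extensional_def)
      then show ?thesis using False by (simp add: ext2_def)
    qed
  qed
qed

lemma ext2_restrict:
  assumes "\<sigma> \<in> extensional (A - {a,b})"
  shows "restrict (ext2 a b x y \<sigma> A) (A - {a,b}) = \<sigma>"
proof
  fix z show "restrict (ext2 a b x y \<sigma> A) (A - {a,b}) z = \<sigma> z"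
    using assms by (cases "z \<in> A - {a,b}") (auto simp: ext2_def extensional_def)
qed

lemma finite_Sigma_Bij:
  assumes "finite P" "finite A" "finite B"
  shows "finite (Sigma P (\<lambda>p. Bij (A - {fst p, snd p}) (B - {x,y})))"
  using assms by (intro finite_SigmaI finite_Bij) auto

lemma split_targets:
  assumes fA: "finite A" and fB: "finite B" and x: "x \<in> B" and y: "y \<in> B" and xy: "x \<noteq> y"
  shows "(\<Sum>\<pi>\<in>Bij A B. G \<pi>) =
         (\<Sum>p\<in>Pairs A. \<Sum>\<sigma>\<in>Bij (A - {fst p, snd p}) (B - {x,y}). G (ext2 (fst p) (snd p) x y \<sigma> A))"
proof -
  let ?S = "Sigma (Pairs A) (\<lambda>p. Bij (A - {fst p, snd p}) (B - {x,y}))"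
  define h where "h q = ext2 (fst (fst q)) (snd (fst q)) x y (snd q) A" for q :: "('a \<times> 'a) \<times> ('a \<Rightarrow> 'b)"
  define g where "g \<pi> = ((inv_into A \<pi> x, inv_into A \<pi> y), restrict \<pi> (A - {inv_into A \<pi> x, inv_into A \<pi> y}))"
    for \<pi> :: "'a \<Rightarrow> 'b"
  have fin: "finite (Pairs A)" using finite_Pairs[OF fA] .
  have "(\<Sum>p\<in>Pairs A. \<Sum>\<sigma>\<in>Bij (A - {fst p, snd p}) (B - {x,y}). G (ext2 (fst p) (snd p) x y \<sigma> A))
        = (\<Sum>q\<in>?S. G (h q))"
    unfolding h_def by (subst sum.Sigma[OF fin]) (simp_all add: fA fB finite_Bij split_beta)
  also have "\<dots> = (\<Sum>\<pi>\<in>Bij A B. G \<pi>)"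
  proof (rule sum.reindex_bij_betw)
    show "bij_betw h ?S (Bij A B)"
    proof (rule bij_betw_byWitness[where f'=g])
      show "\<forall>q\<in>?S. g (h q) = q"
      proof
        fix q assume q: "q \<in> ?S"
        obtain a b \<sigma> where qq: "q = ((a,b),\<sigma>)" by (metis prod.collapse)
        have ab: "a \<in> A" "b \<in> A" "a \<noteq> b" and s: "\<sigma> \<in> Bij (A - {a,b}) (B - {x,y})"
          using q qq by (auto simp: Pairs_def)
        have hb: "h q \<in> Bij A B" unfolding qq h_def using ext2_Bij[OF ab x y xy s] by simp
        then have inj: "inj_on (h q) A" by (simp add: Bij_def bij_betw_def)
        have "h q a = x" "h q b = y" unfolding qq h_def using ab by (simp_all add: ext2_a ext2_b)
        then have ia: "inv_into A (h q) x = a" and ib: "inv_into A (h q) y = b"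
          using inv_into_f_f[OF inj] ab by metis+
        have r: "restrict (h q) (A - {a,b}) = \<sigma>"
          unfolding qq h_def using s by (simp add: ext2_restrict Bij_def)
        have "g (h q) = ((a,b),\<sigma>)" by (simp only: g_def ia ib r)
        then show "g (h q) = q" using qq by simp
      qed
      show "\<forall>\<pi>\<in>Bij A B. h (g \<pi>) = \<pi>"
      proof
        fix \<pi> assume pi: "\<pi> \<in> Bij A B"
        then have bij: "bij_betw \<pi> A B" by (simp add: Bij_def)
        have xa: "x \<in> \<pi> ` A" "y \<in> \<pi> ` A" using bij x y by (auto simp: bij_betw_def)
        let ?a = "inv_into A \<pi> x" and ?b = "inv_into A \<pi> y"
        have aA: "?a \<in> A" "?b \<in> A" using xa by (auto intro: inv_into_into)
        have pa: "\<pi> ?a = x" "\<pi> ?b = y" using xa by (auto simp: f_inv_into_f)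
        have ne: "?a \<noteq> ?b" using pa xy by metis
        have "h (g \<pi>) = ext2 ?a ?b (\<pi> ?a) (\<pi> ?b) (restrict \<pi> (A - {?a,?b})) A"
          unfolding h_def g_def pa by simp
        also have "\<dots> = \<pi>" by (rule Bij_decomp(2)[OF pi aA ne])
        finally show "h (g \<pi>) = \<pi>" .
      qed
      show "h ` ?S \<subseteq> Bij A B"
      proof
        fix \<pi> assume "\<pi> \<in> h ` ?S"
        then obtain q where q: "q \<in> ?S" and pi: "\<pi> = h q" by blast
        obtain a b \<sigma> where qq: "q = ((a,b),\<sigma>)" by (metis prod.collapse)
        have ab: "a \<in> A" "b \<in> A" "a \<noteq> b" and s: "\<sigma> \<in> Bij (A - {a,b}) (B - {x,y})"
          using q qq by (auto simp: Pairs_def)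
        show "\<pi> \<in> Bij A B" unfolding pi qq h_def using ext2_Bij[OF ab x y xy s] by simp
      qed
      show "g ` Bij A B \<subseteq> ?S"
      proof
        fix q assume "q \<in> g ` Bij A B"
        then obtain \<pi> where pi: "\<pi> \<in> Bij A B" and q: "q = g \<pi>" by blast
        then have bij: "bij_betw \<pi> A B" by (simp add: Bij_def)
        have xa: "x \<in> \<pi> ` A" "y \<in> \<pi> ` A" using bij x y by (auto simp: bij_betw_def)
        let ?a = "inv_into A \<pi> x" and ?b = "inv_into A \<pi> y"
        have aA: "?a \<in> A" "?b \<in> A" using xa by (auto intro: inv_into_into)
        have pa: "\<pi> ?a = x" "\<pi> ?b = y" using xa by (auto simp: f_inv_into_f)
        have ne: "?a \<noteq> ?b" using pa xy by metis
        have "restrict \<pi> (A - {?a,?b}) \<in> Bij (A - {?a,?b}) (B - {\<pi> ?a, \<pi> ?b})"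
          using Bij_decomp(1)[OF pi aA ne] .
        then show "q \<in> ?S" unfolding q g_def using aA ne pa by (simp add: Pairs_def)
      qed
    qed
  qed
  finally show ?thesis by simp
qed

lemma split_sources:
  assumes fA: "finite A" and fB: "finite B" and a: "a \<in> A" and b: "b \<in> A" and ab: "a \<noteq> b"
  shows "(\<Sum>\<pi>\<in>Bij A B. G \<pi>) =
         (\<Sum>p\<in>Pairs B. \<Sum>\<sigma>\<in>Bij (A - {a,b}) (B - {fst p, snd p}). G (ext2 a b (fst p) (snd p) \<sigma> A))"
proof -
  let ?S = "Sigma (Pairs B) (\<lambda>p. Bij (A - {a,b}) (B - {fst p, snd p}))"
  define h where "h q = ext2 a b (fst (fst q)) (snd (fst q)) (snd q) A" for q :: "('b \<times> 'b) \<times> ('a \<Rightarrow> 'b)"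
  define g where "g \<pi> = ((\<pi> a, \<pi> b), restrict \<pi> (A - {a,b}))" for \<pi> :: "'a \<Rightarrow> 'b"
  have fin: "finite (Pairs B)" using finite_Pairs[OF fB] .
  have "(\<Sum>p\<in>Pairs B. \<Sum>\<sigma>\<in>Bij (A - {a,b}) (B - {fst p, snd p}). G (ext2 a b (fst p) (snd p) \<sigma> A))
        = (\<Sum>q\<in>?S. G (h q))"
    unfolding h_def by (subst sum.Sigma[OF fin]) (simp_all add: fA fB finite_Bij split_beta)
  also have "\<dots> = (\<Sum>\<pi>\<in>Bij A B. G \<pi>)"
  proof (rule sum.reindex_bij_betw)
    show "bij_betw h ?S (Bij A B)"
    proof (rule bij_betw_byWitness[where f'=g])
      show "\<forall>q\<in>?S. g (h q) = q"
      proof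
        fix q assume q: "q \<in> ?S"
        obtain x y \<sigma> where qq: "q = ((x,y),\<sigma>)" by (metis prod.collapse)
        have xy: "x \<in> B" "y \<in> B" "x \<noteq> y" and s: "\<sigma> \<in> Bij (A - {a,b}) (B - {x,y})"
          using q qq by (auto simp: Pairs_def)
        have "h q a = x" "h q b = y" unfolding qq h_def using a b ab by (simp_all add: ext2_a ext2_b)
        moreover have "restrict (h q) (A - {a,b}) = \<sigma>"
          unfolding qq h_def using s by (simp add: ext2_restrict Bij_def)
        ultimately show "g (h q) = q" unfolding g_def qq by simp
      qed
      show "\<forall>\<pi>\<in>Bij A B. h (g \<pi>) = \<pi>"
      proof
        fix \<pi> assume pi: "\<pi> \<in> Bij A B"
        have "h (g \<pi>) = ext2 a b (\<pi> a) (\<pi> b) (restrict \<pi> (A - {a,b})) A"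
          unfolding h_def g_def by simp
        also have "\<dots> = \<pi>" by (rule Bij_decomp(2)[OF pi a b ab])
        finally show "h (g \<pi>) = \<pi>" .
      qed
      show "h ` ?S \<subseteq> Bij A B"
      proof
        fix \<pi> assume "\<pi> \<in> h ` ?S"
        then obtain q where q: "q \<in> ?S" and pi: "\<pi> = h q" by blast
        obtain x y \<sigma> where qq: "q = ((x,y),\<sigma>)" by (metis prod.collapse)
        have xy: "x \<in> B" "y \<in> B" "x \<noteq> y" and s: "\<sigma> \<in> Bij (A - {a,b}) (B - {x,y})"
          using q qq by (auto simp: Pairs_def)
        show "\<pi> \<in> Bij A B" unfolding pi qq h_def using ext2_Bij[OF a b ab xy s] by simp
      qed
      show "g ` Bij A B \<subseteq> ?S"
      proof
        fix q assume "q \<in> g ` Bij A B"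
        then obtain \<pi> where pi: "\<pi> \<in> Bij A B" and q: "q = g \<pi>" by blast
        then have bij: "bij_betw \<pi> A B" by (simp add: Bij_def)
        have inj: "inj_on \<pi> A" using bij by (simp add: bij_betw_def)
        have "\<pi> a \<in> B" "\<pi> b \<in> B" using bij a b by (auto simp: bij_betw_def)
        moreover have "\<pi> a \<noteq> \<pi> b" using inj a b ab by (auto simp: inj_on_def)
        moreover have "restrict \<pi> (A - {a,b}) \<in> Bij (A - {a,b}) (B - {\<pi> a, \<pi> b})"
          using Bij_decomp(1)[OF pi a b ab] .
        ultimately show "q \<in> ?S" unfolding q g_def by (simp add: Pairs_def)
      qed
    qed
  qed
  finally show ?thesis by simp
qed

lemma card_minus2:
  assumes "finite A" "a \<in> A" "b \<in> A" "a \<noteq> b"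
  shows "card (A - {a,b}) = card A - 2"
proof -
  have f: "finite {a,b}" by simp
  have s: "{a,b} \<subseteq> A" using assms by simp
  have c1: "card (A - {a,b}) = card A - card {a,b}" by (rule card_Diff_subset[OF f s])
  have c2: "card {a,b} = 2" using assms(4) by simp
  show ?thesis unfolding c1 c2 by (rule refl)
qed

lemma sum_pair_image:
  fixes g :: "'a \<Rightarrow> 'a \<Rightarrow> real"
  assumes fB: "finite B" and a: "a \<in> B" and b: "b \<in> B" and ab: "a \<noteq> b"
  shows "(\<Sum>\<rho>\<in>Bij B B. g (\<rho> a) (\<rho> b)) = fact (card B - 2) * (\<Sum>p\<in>Pairs B. g (fst p) (snd p))"
proof -
  have "(\<Sum>\<rho>\<in>Bij B B. g (\<rho> a) (\<rho> b)) =
        (\<Sum>p\<in>Pairs B. \<Sum>\<sigma>\<in>Bij (B - {a,b}) (B - {fst p, snd p}). g (ext2 a b (fst p) (snd p) \<sigma> B a) (ext2 a b (fst p) (snd p) \<sigma> B b))"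
    by (rule split_sources[OF fB fB a b ab])
  also have "\<dots> = (\<Sum>p\<in>Pairs B. fact (card B - 2) * g (fst p) (snd p))"
  proof (rule sum.cong[OF refl])
    fix p assume p: "p \<in> Pairs B"
    have c: "card (Bij (B - {a,b}) (B - {fst p, snd p})) = fact (card B - 2)"
    proof -
      have "card (B - {a,b}) = card B - 2" by (rule card_minus2[OF fB a b ab])
      moreover have "card (B - {fst p, snd p}) = card B - 2"
        using p by (intro card_minus2[OF fB]) (auto simp: Pairs_def)
      ultimately show ?thesis using card_Bij[of "B - {a,b}" "B - {fst p, snd p}"] fB by simp
    qed
    show "(\<Sum>\<sigma>\<in>Bij (B - {a,b}) (B - {fst p, snd p}). g (ext2 a b (fst p) (snd p) \<sigma> B a) (ext2 a b (fst p) (snd p) \<sigma> B b))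
          = fact (card B - 2) * g (fst p) (snd p)"
      using a b ab c by (simp add: ext2_a ext2_b)
  qed
  also have "\<dots> = fact (card B - 2) * (\<Sum>p\<in>Pairs B. g (fst p) (snd p))" by (simp add: sum_distrib_left)
  finally show ?thesis .
qed


fun sig :: "(nat \<Rightarrow> 'a) \<Rightarrow> (nat \<Rightarrow> 'a) \<Rightarrow> nat \<Rightarrow> (nat \<Rightarrow> bool) \<Rightarrow> 'a \<Rightarrow> 'a" where
  "sig X Y 0 \<epsilon> = id"
| "sig X Y (Suc m) \<epsilon> = (if \<epsilon> m then Transposition.transpose (X m) (Y m) else id) \<circ> sig X Y m \<epsilon>"

definition disj :: "(nat \<Rightarrow> 'a) \<Rightarrow> (nat \<Rightarrow> 'a) \<Rightarrow> nat \<Rightarrow> bool" where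
  "disj X Y m \<longleftrightarrow> (\<forall>l<m. \<forall>l'<m. X l \<noteq> Y l' \<and> (X l = X l' \<longrightarrow> l = l') \<and> (Y l = Y l' \<longrightarrow> l = l'))"

lemma disjD: "disj X Y m \<Longrightarrow> l < m \<Longrightarrow> l' < m \<Longrightarrow> X l \<noteq> Y l' \<and> (l \<noteq> l' \<longrightarrow> X l \<noteq> X l' \<and> Y l \<noteq> Y l')"
  unfolding disj_def by blast

lemma disj_Suc: "disj X Y (Suc m) \<Longrightarrow> disj X Y m"
  unfolding disj_def by simp

lemma sig_char:
  assumes "disj X Y m"
  shows "(\<forall>l<m. sig X Y m \<epsilon> (X l) = (if \<epsilon> l then Y l else X l) \<and> sig X Y m \<epsilon> (Y l) = (if \<epsilon> l then X l else Y l))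
       \<and> (\<forall>z. (\<forall>l<m. z \<noteq> X l \<and> z \<noteq> Y l) \<longrightarrow> sig X Y m \<epsilon> z = z)"
  using assms
proof (induction m)
  case 0
  then show ?case by simp
next
  case (Suc m)
  have d: "disj X Y (Suc m)" using Suc.prems .
  have IH: "(\<forall>l<m. sig X Y m \<epsilon> (X l) = (if \<epsilon> l then Y l else X l) \<and> sig X Y m \<epsilon> (Y l) = (if \<epsilon> l then X l else Y l))
       \<and> (\<forall>z. (\<forall>l<m. z \<noteq> X l \<and> z \<noteq> Y l) \<longrightarrow> sig X Y m \<epsilon> z = z)"
    using Suc.IH[OF disj_Suc[OF d]] .
  let ?T = "(if \<epsilon> m then Transposition.transpose (X m) (Y m) else id)"
  have fixT: "?T z = z" if "z \<noteq> X m" "z \<noteq> Y m" for z using that by simp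
  have dm: "\<forall>l<m. X l \<noteq> X m \<and> X l \<noteq> Y m \<and> Y l \<noteq> X m \<and> Y l \<noteq> Y m"
  proof (intro allI impI)
    fix l assume l: "l < m"
    have l1: "l < Suc m" "m < Suc m" "l \<noteq> m" "m \<noteq> l" using l by auto
    have h1: "X l \<noteq> Y m \<and> (l \<noteq> m \<longrightarrow> X l \<noteq> X m \<and> Y l \<noteq> Y m)" by (rule disjD[OF d l1(1) l1(2)])
    have h2: "X m \<noteq> Y l" using disjD[OF d l1(2) l1(1)] by simp
    show "X l \<noteq> X m \<and> X l \<noteq> Y m \<and> Y l \<noteq> X m \<and> Y l \<noteq> Y m"
      using h1 h2 l1(3) by metis
  qed
  have xym: "X m \<noteq> Y m" using disjD[OF d, of m m] by simp
  have A: "\<forall>l<Suc m. sig X Y (Suc m) \<epsilon> (X l) = (if \<epsilon> l then Y l else X l) \<and> sig X Y (Suc m) \<epsilon> (Y l) = (if \<epsilon> l then X l else Y l)"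
  proof (intro allI impI)
    fix l assume l: "l < Suc m"
    show "sig X Y (Suc m) \<epsilon> (X l) = (if \<epsilon> l then Y l else X l) \<and> sig X Y (Suc m) \<epsilon> (Y l) = (if \<epsilon> l then X l else Y l)"
    proof (cases "l < m")
      case True
      have s1: "sig X Y m \<epsilon> (X l) = (if \<epsilon> l then Y l else X l)" and s2: "sig X Y m \<epsilon> (Y l) = (if \<epsilon> l then X l else Y l)"
        using IH True by auto
      have "?T (if \<epsilon> l then Y l else X l) = (if \<epsilon> l then Y l else X l)" using dm True by (intro fixT) auto
      moreover have "?T (if \<epsilon> l then X l else Y l) = (if \<epsilon> l then X l else Y l)" using dm True by (intro fixT) auto
      ultimately show ?thesis using s1 s2 by simp
    next
      case False
      then have lm: "l = m" using l by simp
      have "\<forall>l'<m. X m \<noteq> X l' \<and> X m \<noteq> Y l'" using dm by auto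
      then have s1: "sig X Y m \<epsilon> (X m) = X m" using IH by blast
      have "\<forall>l'<m. Y m \<noteq> X l' \<and> Y m \<noteq> Y l'" using dm by auto
      then have s2: "sig X Y m \<epsilon> (Y m) = Y m" using IH by blast
      show ?thesis unfolding lm using s1 s2 xym by simp
    qed
  qed
  have B: "\<forall>z. (\<forall>l<Suc m. z \<noteq> X l \<and> z \<noteq> Y l) \<longrightarrow> sig X Y (Suc m) \<epsilon> z = z"
  proof (intro allI impI)
    fix z assume z: "\<forall>l<Suc m. z \<noteq> X l \<and> z \<noteq> Y l"
    then have "sig X Y m \<epsilon> z = z" using IH by auto
    moreover have "?T z = z" using z by (intro fixT) auto
    ultimately show "sig X Y (Suc m) \<epsilon> z = z" by simp
  qed
  show ?case using A B by blast
qed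

lemma sig_X: "disj X Y m \<Longrightarrow> l < m \<Longrightarrow> sig X Y m \<epsilon> (X l) = (if \<epsilon> l then Y l else X l)"
  using sig_char by blast
lemma sig_Y: "disj X Y m \<Longrightarrow> l < m \<Longrightarrow> sig X Y m \<epsilon> (Y l) = (if \<epsilon> l then X l else Y l)"
  using sig_char by blast
lemma sig_other: "disj X Y m \<Longrightarrow> (\<And>l. l < m \<Longrightarrow> z \<noteq> X l \<and> z \<noteq> Y l) \<Longrightarrow> sig X Y m \<epsilon> z = z"
  using sig_char by blast

lemma sig_cases:
  obtains (cX) l where "l < m" "z = X l" | (cY) l where "l < m" "z = Y l" | (cO) "\<And>l. l < m \<Longrightarrow> z \<noteq> X l \<and> z \<noteq> Y l"
  by blast

lemma sig_invol:
  assumes d: "disj X Y m"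
  shows "sig X Y m \<epsilon> (sig X Y m \<epsilon> z) = z"
proof (cases rule: sig_cases[where z=z and m=m and X=X and Y=Y])
  case (cX l) then show ?thesis using sig_X[OF d] sig_Y[OF d] by simp
next
  case (cY l) then show ?thesis using sig_X[OF d] sig_Y[OF d] by simp
next
  case cO then show ?thesis using sig_other[OF d] by simp
qed

lemma sig_in:
  assumes d: "disj X Y m" and XY: "\<And>l. l < m \<Longrightarrow> X l \<in> B \<and> Y l \<in> B" and z: "z \<in> B"
  shows "sig X Y m \<epsilon> z \<in> B"
proof (cases rule: sig_cases[where z=z and m=m and X=X and Y=Y])
  case (cX l) then show ?thesis using sig_X[OF d] XY by simp
next
  case (cY l) then show ?thesis using sig_Y[OF d] XY by simp
next
  case cO then show ?thesis using sig_other[OF d] z by simp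
qed

lemma sig_bij:
  assumes d: "disj X Y m" and XY: "\<And>l. l < m \<Longrightarrow> X l \<in> B \<and> Y l \<in> B"
  shows "bij_betw (sig X Y m \<epsilon>) B B"
proof (rule bij_betw_byWitness[where f'="sig X Y m \<epsilon>"])
  show "\<forall>a\<in>B. sig X Y m \<epsilon> (sig X Y m \<epsilon> a) = a" using sig_invol[OF d] by blast
  show "\<forall>a\<in>B. sig X Y m \<epsilon> (sig X Y m \<epsilon> a) = a" using sig_invol[OF d] by blast
  show "sig X Y m \<epsilon> ` B \<subseteq> B" using sig_in[OF d XY] by blast
  show "sig X Y m \<epsilon> ` B \<subseteq> B" using sig_in[OF d XY] by blast
qed

lemma sig_junta:
  assumes d: "disj X Y m" and agree: "\<And>l. l < m \<Longrightarrow> z = X l \<or> z = Y l \<Longrightarrow> \<epsilon> l = \<epsilon>' l"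
  shows "sig X Y m \<epsilon> z = sig X Y m \<epsilon>' z"
proof (cases rule: sig_cases[where z=z and m=m and X=X and Y=Y])
  case (cX l) then show ?thesis using sig_X[OF d] agree by simp
next
  case (cY l) then show ?thesis using sig_Y[OF d] agree by simp
next
  case cO then show ?thesis using sig_other[OF d] by simp
qed

lemma sig_flip:
  assumes d: "disj X Y m" and j: "j < m"
  shows "sig X Y m (\<epsilon>(j:=True)) z = Transposition.transpose (X j) (Y j) (sig X Y m (\<epsilon>(j:=False)) z)"
proof -
  have xy: "X j \<noteq> Y j" using disjD[OF d j j] by simp
  show ?thesis
  proof (cases rule: sig_cases[where z=z and m=m and X=X and Y=Y])
    case (cX l)
    show ?thesis
    proof (cases "l = j")
      case True then show ?thesis using cX sig_X[OF d] xy by simp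
    next
      case False
      have "X l \<noteq> X j" "X l \<noteq> Y j" "Y l \<noteq> X j" "Y l \<noteq> Y j"
        using disjD[OF d cX(1) j] disjD[OF d j cX(1)] False by auto
      then show ?thesis using cX sig_X[OF d] False by simp
    qed
  next
    case (cY l)
    show ?thesis
    proof (cases "l = j")
      case True then show ?thesis using cY sig_Y[OF d] xy by simp
    next
      case False
      have "X l \<noteq> X j" "X l \<noteq> Y j" "Y l \<noteq> X j" "Y l \<noteq> Y j"
        using disjD[OF d cY(1) j] disjD[OF d j cY(1)] False by auto
      then show ?thesis using cY sig_Y[OF d] False by simp
    qed
  next
    case cO
    have "z \<noteq> X j" "z \<noteq> Y j" using cO j by auto
    then show ?thesis using cO sig_other[OF d] by simp
  qed
qed


lemma E_sum: "finite I \<Longrightarrow> E m (\<lambda>\<epsilon>. \<Sum>i\<in>I. f i \<epsilon>) = (\<Sum>i\<in>I. E m (f i))"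
  unfolding E_def by (subst sum.swap) (simp add: sum_divide_distrib)

lemma Fk_sig_deg:
  assumes fA: "finite A" and d: "disj X Y m" and k: "k \<ge> 1"
  shows "deg_le k (\<lambda>\<epsilon>. Fk k A w u (sig X Y m \<epsilon> \<circ> \<pi>))"
proof -
  define S where "S e = {l. l < m \<and> (X l \<in> \<pi> ` e \<or> Y l \<in> \<pi> ` e)}" for e
  have "deg_le k (\<lambda>\<epsilon>. \<Sum>e\<in>ksets A k. w e * u ((sig X Y m \<epsilon> \<circ> \<pi>) ` e))"
  proof (rule deg_le_sum[where S=S])
    show "finite (ksets A k)" by (rule finite_ksets[OF fA])
    fix e assume e: "e \<in> ksets A k"
    have ce: "card e = k" using e by (simp add: ksets_def)
    then have fe: "finite e" using k by (metis card.infinite not_one_le_zero)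
    have j: "junta (S e) (\<lambda>\<epsilon>. w e * u ((sig X Y m \<epsilon> \<circ> \<pi>) ` e))"
      unfolding junta_def
    proof (intro allI impI)
      fix \<epsilon> \<epsilon>' :: "nat \<Rightarrow> bool" assume ag: "\<forall>i\<in>S e. \<epsilon> i = \<epsilon>' i"
      have "(sig X Y m \<epsilon> \<circ> \<pi>) ` e = (sig X Y m \<epsilon>' \<circ> \<pi>) ` e"
      proof (rule image_cong[OF refl])
        fix z assume z: "z \<in> e"
        show "(sig X Y m \<epsilon> \<circ> \<pi>) z = (sig X Y m \<epsilon>' \<circ> \<pi>) z"
          unfolding comp_def
        proof (rule sig_junta[OF d])
          fix l assume l: "l < m" and "\<pi> z = X l \<or> \<pi> z = Y l"
          then have "X l \<in> \<pi> ` e \<or> Y l \<in> \<pi> ` e" using z by (metis imageI)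
          then have "l \<in> S e" using l by (simp add: S_def)
          then show "\<epsilon> l = \<epsilon>' l" using ag by blast
        qed
      qed
      then show "w e * u ((sig X Y m \<epsilon> \<circ> \<pi>) ` e) = w e * u ((sig X Y m \<epsilon>' \<circ> \<pi>) ` e)" by simp
    qed
    have fS: "finite (S e)" by (rule finite_subset[of _ "{..<m}"]) (auto simp: S_def)
    define h where "h l = (if X l \<in> \<pi> ` e then X l else Y l)" for l
    have inj: "inj_on h (S e)"
    proof (rule inj_onI)
      fix l l' assume l: "l \<in> S e" and l': "l' \<in> S e" and eq: "h l = h l'"
      have lm: "l < m" "l' < m" using l l' by (auto simp: S_def)
      show "l = l'"
      proof (rule ccontr)
        assume ne: "l \<noteq> l'"
        have a1: "X l \<noteq> Y l'" "X l \<noteq> X l'" "Y l \<noteq> Y l'" using disjD[OF d lm(1) lm(2)] ne by auto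
        have a2: "X l' \<noteq> Y l" using disjD[OF d lm(2) lm(1)] by auto
        show False using eq a1 a2 unfolding h_def by (auto split: if_splits)
      qed
    qed
    have sub: "h ` S e \<subseteq> \<pi> ` e" by (auto simp: h_def S_def)
    have "card (S e) \<le> card (\<pi> ` e)" by (rule card_inj_on_le[OF inj sub]) (use fe in simp)
    also have "\<dots> \<le> card e" by (rule card_image_le[OF fe])
    finally have "card (S e) \<le> k" using ce by simp
    then show "junta (S e) (\<lambda>\<epsilon>. w e * u ((sig X Y m \<epsilon> \<circ> \<pi>) ` e)) \<and> finite (S e) \<and> card (S e) \<le> k"
      using j fS by simp
  qed
  then show ?thesis unfolding Fk_def .
qed

lemma cube_step:
  assumes fA: "finite A" and fB: "finite B" and d: "disj X Y m"
      and XY: "\<And>l. l < m \<Longrightarrow> X l \<in> B \<and> Y l \<in> B" and k: "k \<ge> 1"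
  shows "(\<Sum>l<m. \<Sum>\<pi>\<in>Bij A B. \<bar>Fk k A w u \<pi> - Fk k A w u (Transposition.transpose (X l) (Y l) \<circ> \<pi>)\<bar>)
         \<le> 2 * 3 ^ k * sqrt (real k * real m) * (\<Sum>\<pi>\<in>Bij A B. \<bar>Fk k A w u \<pi>\<bar>)"
proof -
  let ?F = "Fk k A w u"
  define f where "f \<pi> \<epsilon> = ?F (sig X Y m \<epsilon> \<circ> \<pi>)" for \<pi> \<epsilon>
  define H where "H l = (\<Sum>\<pi>\<in>Bij A B. \<bar>?F \<pi> - ?F (Transposition.transpose (X l) (Y l) \<circ> \<pi>)\<bar>)" for l
  define C where "C = 3 ^ k * sqrt (real k * real m)"
  have fBij: "finite (Bij A B)" by (rule finite_Bij[OF fA fB])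
  have step: "(\<Sum>j<m. E m (\<lambda>\<epsilon>. \<bar>D j (f \<pi>) \<epsilon>\<bar>)) \<le> C * E m (\<lambda>\<epsilon>. \<bar>f \<pi> \<epsilon>\<bar>)" for \<pi>
    unfolding C_def f_def by (rule cube_anticonc[OF Fk_sig_deg[OF fA d k]])
  have sb: "bij_betw (sig X Y m \<epsilon>) B B" for \<epsilon> by (rule sig_bij[OF d XY])
  have restr: "?F (\<rho> \<circ> \<pi>) = ?F (restrict (\<rho> \<circ> \<pi>) A)" for \<rho> \<pi> :: "'a \<Rightarrow> 'a" by (rule Fk_cong) simp
  have R: "(\<Sum>\<pi>\<in>Bij A B. E m (\<lambda>\<epsilon>. \<bar>f \<pi> \<epsilon>\<bar>)) = (\<Sum>\<pi>\<in>Bij A B. \<bar>?F \<pi>\<bar>)"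
  proof -
    have "(\<Sum>\<pi>\<in>Bij A B. E m (\<lambda>\<epsilon>. \<bar>f \<pi> \<epsilon>\<bar>)) = E m (\<lambda>\<epsilon>. \<Sum>\<pi>\<in>Bij A B. \<bar>f \<pi> \<epsilon>\<bar>)"
      by (rule E_sum[OF fBij, symmetric])
    also have "\<dots> = E m (\<lambda>\<epsilon>. \<Sum>\<pi>\<in>Bij A B. \<bar>?F \<pi>\<bar>)"
    proof -
      have "(\<Sum>\<pi>\<in>Bij A B. \<bar>f \<pi> \<epsilon>\<bar>) = (\<Sum>\<pi>\<in>Bij A B. \<bar>?F \<pi>\<bar>)" for \<epsilon>
      proof -
        have "(\<Sum>\<pi>\<in>Bij A B. \<bar>f \<pi> \<epsilon>\<bar>) = (\<Sum>\<pi>\<in>Bij A B. \<bar>?F (restrict (sig X Y m \<epsilon> \<circ> \<pi>) A)\<bar>)"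
          unfolding f_def by (simp only: restr)
        also have "\<dots> = (\<Sum>\<pi>\<in>Bij A B. \<bar>?F \<pi>\<bar>)"
          by (rule sum_Bij_left[OF sb, where G="\<lambda>\<pi>. \<bar>?F \<pi>\<bar>"])
        finally show ?thesis .
      qed
      then show ?thesis by simp
    qed
    also have "\<dots> = (\<Sum>\<pi>\<in>Bij A B. \<bar>?F \<pi>\<bar>)" by (rule E_const)
    finally show ?thesis .
  qed
  have L: "(\<Sum>\<pi>\<in>Bij A B. E m (\<lambda>\<epsilon>. \<bar>D j (f \<pi>) \<epsilon>\<bar>)) = H j / 2" if j: "j < m" for j
  proof -
    let ?T = "Transposition.transpose (X j) (Y j)"
    have "(\<Sum>\<pi>\<in>Bij A B. E m (\<lambda>\<epsilon>. \<bar>D j (f \<pi>) \<epsilon>\<bar>)) = E m (\<lambda>\<epsilon>. \<Sum>\<pi>\<in>Bij A B. \<bar>D j (f \<pi>) \<epsilon>\<bar>)"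
      by (rule E_sum[OF fBij, symmetric])
    also have "\<dots> = E m (\<lambda>\<epsilon>. H j / 2)"
    proof -
      have eqH: "(\<Sum>\<pi>\<in>Bij A B. \<bar>D j (f \<pi>) \<epsilon>\<bar>) = H j / 2" for \<epsilon>
      proof -
        let ?\<rho> = "sig X Y m (\<epsilon>(j:=False))"
        have eq: "\<bar>D j (f \<pi>) \<epsilon>\<bar> = \<bar>?F (restrict (?\<rho> \<circ> \<pi>) A) - ?F (?T \<circ> restrict (?\<rho> \<circ> \<pi>) A)\<bar> / 2" for \<pi>
        proof -
          have a: "?F (sig X Y m (\<epsilon>(j:=True)) \<circ> \<pi>) = ?F (?T \<circ> restrict (?\<rho> \<circ> \<pi>) A)"
            by (rule Fk_cong) (simp add: sig_flip[OF d j])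
          have b: "?F (?\<rho> \<circ> \<pi>) = ?F (restrict (?\<rho> \<circ> \<pi>) A)" by (rule restr)
          show ?thesis unfolding D_def f_def a b by (simp add: abs_minus_commute)
        qed
        have "(\<Sum>\<pi>\<in>Bij A B. \<bar>D j (f \<pi>) \<epsilon>\<bar>) = (\<Sum>\<pi>\<in>Bij A B. \<bar>?F (restrict (?\<rho> \<circ> \<pi>) A) - ?F (?T \<circ> restrict (?\<rho> \<circ> \<pi>) A)\<bar> / 2)"
          by (rule sum.cong[OF refl]) (rule eq)
        also have "\<dots> = (\<Sum>\<pi>\<in>Bij A B. \<bar>?F \<pi> - ?F (?T \<circ> \<pi>)\<bar> / 2)"
          by (rule sum_Bij_left[OF sb, where G="\<lambda>\<pi>. \<bar>?F \<pi> - ?F (?T \<circ> \<pi>)\<bar> / 2"])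
        also have "\<dots> = H j / 2" unfolding H_def by (simp add: sum_divide_distrib)
        finally show ?thesis .
      qed
      show ?thesis by (simp only: eqH)
    qed
    also have "\<dots> = H j / 2" by (rule E_const)
    finally show ?thesis .
  qed
  have "(\<Sum>j<m. H j / 2) = (\<Sum>j<m. \<Sum>\<pi>\<in>Bij A B. E m (\<lambda>\<epsilon>. \<bar>D j (f \<pi>) \<epsilon>\<bar>))"
    by (rule sum.cong[OF refl]) (simp add: L)
  also have "\<dots> = (\<Sum>\<pi>\<in>Bij A B. \<Sum>j<m. E m (\<lambda>\<epsilon>. \<bar>D j (f \<pi>) \<epsilon>\<bar>))" by (rule sum.swap)
  also have "\<dots> \<le> (\<Sum>\<pi>\<in>Bij A B. C * E m (\<lambda>\<epsilon>. \<bar>f \<pi> \<epsilon>\<bar>))" by (rule sum_mono) (rule step)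
  also have "\<dots> = C * (\<Sum>\<pi>\<in>Bij A B. \<bar>?F \<pi>\<bar>)" by (simp add: sum_distrib_left[symmetric] R)
  finally have "(\<Sum>j<m. H j / 2) \<le> C * (\<Sum>\<pi>\<in>Bij A B. \<bar>?F \<pi>\<bar>)" .
  then have "(\<Sum>j<m. H j) \<le> 2 * C * (\<Sum>\<pi>\<in>Bij A B. \<bar>?F \<pi>\<bar>)" by (simp add: sum_divide_distrib[symmetric])
  then show ?thesis unfolding H_def C_def by (simp add: mult.assoc)
qed



lemma fact_minus2: "n \<ge> 2 \<Longrightarrow> (fact n :: real) = real n * (real n - 1) * fact (n - 2)"
proof -
  assume "n \<ge> 2"
  then obtain r where n: "n = Suc (Suc r)" by (metis add_2_eq_Suc le_Suc_ex)
  show ?thesis unfolding n by (simp add: algebra_simps)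
qed

lemma avg_pairs:
  assumes fA: "finite A" and fB: "finite B" and cA: "card A = n" and cB: "card B = n" and n2: "n \<ge> 2"
      and k: "k \<ge> 1"
  shows "(\<Sum>p\<in>Pairs B. \<Sum>\<pi>\<in>Bij A B. \<bar>Fk k A w u \<pi> - Fk k A w u (Transposition.transpose (fst p) (snd p) \<circ> \<pi>)\<bar>)
         \<le> real n * (real n - 1) * (2 * 3 ^ k * sqrt (real k * real (n div 2))) / real (n div 2)
             * (\<Sum>\<pi>\<in>Bij A B. \<bar>Fk k A w u \<pi>\<bar>)"
proof -
  let ?F = "Fk k A w u"
  define m where "m = n div 2"
  define H where "H x y = (\<Sum>\<pi>\<in>Bij A B. \<bar>?F \<pi> - ?F (Transposition.transpose x y \<circ> \<pi>)\<bar>)" for x y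
  define S where "S = (\<Sum>\<pi>\<in>Bij A B. \<bar>?F \<pi>\<bar>)"
  define K where "K = 2 * 3 ^ k * sqrt (real k * real m)"
  have m1: "m \<ge> 1" using n2 unfolding m_def by simp
  have m2: "2 * m \<le> n" unfolding m_def by simp
  obtain \<beta> where \<beta>: "bij_betw \<beta> {0..<n} B" using ex_bij_betw_nat_finite[OF fB] cB by blast
  have \<beta>inj: "\<beta> a = \<beta> b \<Longrightarrow> a < n \<Longrightarrow> b < n \<Longrightarrow> a = b" for a b
    using \<beta> unfolding bij_betw_def inj_on_def by simp
  have \<beta>B: "a < n \<Longrightarrow> \<beta> a \<in> B" for a using \<beta> unfolding bij_betw_def by auto
  have bound: "(\<Sum>l<m. H (\<rho> (\<beta> (2*l))) (\<rho> (\<beta> (2*l+1)))) \<le> K * S" if \<rho>: "\<rho> \<in> Bij B B" for \<rho>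
  proof -
    have \<rho>b: "bij_betw \<rho> B B" using \<rho> by (simp add: Bij_def)
    have \<rho>inj: "\<rho> a = \<rho> b \<Longrightarrow> a \<in> B \<Longrightarrow> b \<in> B \<Longrightarrow> a = b" for a b
      using \<rho>b unfolding bij_betw_def inj_on_def by simp
    have \<rho>B: "a \<in> B \<Longrightarrow> \<rho> a \<in> B" for a using \<rho>b unfolding bij_betw_def by auto
    define X where "X l = \<rho> (\<beta> (2*l))" for l
    define Y where "Y l = \<rho> (\<beta> (2*l+1))" for l
    have lt: "2*l < n" "2*l+1 < n" if "l < m" for l using that m2 by auto
    have d: "disj X Y m" unfolding disj_def
    proof (intro allI impI)
      fix l l' assume l: "l < m" and l': "l' < m"
      have a1: "X l \<noteq> Y l'"
      proof
        assume "X l = Y l'"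
        then have "\<beta> (2*l) = \<beta> (2*l'+1)" unfolding X_def Y_def using \<rho>inj \<beta>B lt l l' by blast
        then have "2*l = 2*l'+1" using \<beta>inj lt l l' by blast
        then show False by presburger
      qed
      have a2: "X l = X l' \<longrightarrow> l = l'"
      proof
        assume "X l = X l'"
        then have "\<beta> (2*l) = \<beta> (2*l')" unfolding X_def using \<rho>inj \<beta>B lt l l' by blast
        then have "2*l = 2*l'" using \<beta>inj lt l l' by blast
        then show "l = l'" by simp
      qed
      have a3: "Y l = Y l' \<longrightarrow> l = l'"
      proof
        assume "Y l = Y l'"
        then have "\<beta> (2*l+1) = \<beta> (2*l'+1)" unfolding Y_def using \<rho>inj \<beta>B lt l l' by blast
        then have "2*l+1 = 2*l'+1" using \<beta>inj lt l l' by blast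
        then show "l = l'" by simp
      qed
      show "X l \<noteq> Y l' \<and> (X l = X l' \<longrightarrow> l = l') \<and> (Y l = Y l' \<longrightarrow> l = l')" using a1 a2 a3 by blast
    qed
    have XY: "X l \<in> B \<and> Y l \<in> B" if "l < m" for l unfolding X_def Y_def using lt[OF that] \<beta>B \<rho>B by blast
    have "(\<Sum>l<m. H (X l) (Y l)) \<le> K * S"
      using cube_step[OF fA fB d XY k] unfolding H_def K_def S_def by simp
    then show ?thesis unfolding X_def Y_def .
  qed
  have fBB: "finite (Bij B B)" by (rule finite_Bij[OF fB fB])
  have cBB: "card (Bij B B) = fact n" using card_Bij[OF fB fB refl] cB by simp
  have "(\<Sum>\<rho>\<in>Bij B B. \<Sum>l<m. H (\<rho> (\<beta> (2*l))) (\<rho> (\<beta> (2*l+1)))) \<le> (\<Sum>\<rho>\<in>Bij B B. K * S)"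
    by (rule sum_mono) (rule bound)
  also have "\<dots> = fact n * (K * S)" using cBB by simp
  finally have up: "(\<Sum>\<rho>\<in>Bij B B. \<Sum>l<m. H (\<rho> (\<beta> (2*l))) (\<rho> (\<beta> (2*l+1)))) \<le> fact n * (K * S)" .
  have "(\<Sum>\<rho>\<in>Bij B B. \<Sum>l<m. H (\<rho> (\<beta> (2*l))) (\<rho> (\<beta> (2*l+1)))) = (\<Sum>l<m. \<Sum>\<rho>\<in>Bij B B. H (\<rho> (\<beta> (2*l))) (\<rho> (\<beta> (2*l+1))))"
    by (rule sum.swap)
  also have "\<dots> = (\<Sum>l<m. fact (n - 2) * (\<Sum>p\<in>Pairs B. H (fst p) (snd p)))"
  proof (rule sum.cong[OF refl])
    fix l assume "l \<in> {..<m}"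
    then have l: "2*l < n" "2*l+1 < n" using m2 by auto
    have ne: "\<beta> (2*l) \<noteq> \<beta> (2*l+1)"
    proof
      assume "\<beta> (2*l) = \<beta> (2*l+1)"
      then have "2*l = 2*l+1" using \<beta>inj l by blast
      then show False by simp
    qed
    show "(\<Sum>\<rho>\<in>Bij B B. H (\<rho> (\<beta> (2*l))) (\<rho> (\<beta> (2*l+1)))) = fact (n - 2) * (\<Sum>p\<in>Pairs B. H (fst p) (snd p))"
      using sum_pair_image[OF fB \<beta>B[OF l(1)] \<beta>B[OF l(2)] ne, of H] cB by simp
  qed
  also have "\<dots> = real m * fact (n - 2) * (\<Sum>p\<in>Pairs B. H (fst p) (snd p))" by simp
  finally have low: "real m * fact (n - 2) * (\<Sum>p\<in>Pairs B. H (fst p) (snd p)) \<le> fact n * (K * S)" using up by simp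
  have fn: "(fact n :: real) = real n * (real n - 1) * fact (n - 2)" by (rule fact_minus2[OF n2])
  have pos: "real m * fact (n - 2) > 0" using m1 by simp
  have "(\<Sum>p\<in>Pairs B. H (fst p) (snd p)) \<le> fact n * (K * S) / (real m * fact (n - 2))"
    using low pos by (simp add: field_simps)
  also have "\<dots> = (real n * (real n - 1) * K * S * fact (n - 2)) / (real m * fact (n - 2))"
    unfolding fn by (simp only: mult_ac)
  also have "\<dots> = real n * (real n - 1) * K * S / real m" by simp
  also have "\<dots> = real n * (real n - 1) * K / real m * S" by simp
  finally show ?thesis unfolding H_def K_def S_def m_def .
qed

lemma H_split:
  assumes fA: "finite A" and fB: "finite B" and x: "x \<in> B" and y: "y \<in> B" and xy: "x \<noteq> y" and k: "k \<ge> 1"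
  shows "(\<Sum>\<pi>\<in>Bij A B. \<bar>Fk k A w u \<pi> - Fk k A w u (Transposition.transpose x y \<circ> \<pi>)\<bar>) =
         (\<Sum>p\<in>Pairs A. \<Sum>\<sigma>\<in>Bij (A - {fst p, snd p}) (B - {x,y}).
            \<bar>Fk (k - 1) (A - {fst p, snd p}) (\<lambda>e. w (insert (fst p) e) - w (insert (snd p) e))
                (\<lambda>e. u (insert x e) - u (insert y e)) \<sigma>\<bar>)"
proof -
  let ?G = "\<lambda>\<pi>. \<bar>Fk k A w u \<pi> - Fk k A w u (Transposition.transpose x y \<circ> \<pi>)\<bar>"
  have "(\<Sum>\<pi>\<in>Bij A B. ?G \<pi>) = (\<Sum>p\<in>Pairs A. \<Sum>\<sigma>\<in>Bij (A - {fst p, snd p}) (B - {x,y}). ?G (ext2 (fst p) (snd p) x y \<sigma> A))"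
    by (rule split_targets[OF fA fB x y xy])
  also have "\<dots> = (\<Sum>p\<in>Pairs A. \<Sum>\<sigma>\<in>Bij (A - {fst p, snd p}) (B - {x,y}).
            \<bar>Fk (k - 1) (A - {fst p, snd p}) (\<lambda>e. w (insert (fst p) e) - w (insert (snd p) e))
                (\<lambda>e. u (insert x e) - u (insert y e)) \<sigma>\<bar>)"
  proof (rule sum.cong[OF refl], rule sum.cong[OF refl])
    fix p \<sigma> assume p: "p \<in> Pairs A" and s: "\<sigma> \<in> Bij (A - {fst p, snd p}) (B - {x,y})"
    obtain a b where pab: "p = (a,b)" by (metis prod.collapse)
    have ab: "a \<in> A" "b \<in> A" "a \<noteq> b" using p pab by (auto simp: Pairs_def)
    have s': "\<sigma> \<in> Bij (A - {a,b}) (B - {x,y})" using s pab by simp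
    let ?\<pi> = "ext2 a b x y \<sigma> A"
    have piB: "?\<pi> \<in> Bij A B" by (rule ext2_Bij[OF ab x y xy s'])
    then have bij: "bij_betw ?\<pi> A B" by (simp add: Bij_def)
    have "Fk k A w u ?\<pi> - Fk k A w u (Transposition.transpose x y \<circ> ?\<pi>) =
          Fk (k - 1) (A - {a,b}) (\<lambda>e. w (insert a e) - w (insert b e)) (\<lambda>e. u (insert x e) - u (insert y e)) ?\<pi>"
      by (rule Fk_diff[OF fA bij ab ext2_a[OF ab(1)] ext2_b[OF ab(2) ab(3)] k])
    also have "\<dots> = Fk (k - 1) (A - {a,b}) (\<lambda>e. w (insert a e) - w (insert b e)) (\<lambda>e. u (insert x e) - u (insert y e)) \<sigma>"
      by (rule Fk_cong) (simp add: ext2_other)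
    finally show "?G (ext2 (fst p) (snd p) x y \<sigma> A) =
            \<bar>Fk (k - 1) (A - {fst p, snd p}) (\<lambda>e. w (insert (fst p) e) - w (insert (snd p) e))
                (\<lambda>e. u (insert x e) - u (insert y e)) \<sigma>\<bar>"
      unfolding pab by simp
  qed
  finally show ?thesis .
qed


definition Wsum :: "nat \<Rightarrow> 'a set \<Rightarrow> 'a set \<Rightarrow> ('a set \<Rightarrow> real) \<Rightarrow> ('a set \<Rightarrow> real) \<Rightarrow> real" where
  "Wsum k A B w u = (\<Sum>i=0..k. real (card A) powr (- real i / 2) * Wvec k A w i * Wvec k B u i)"

lemma Wvec_nonneg: "Wvec k V w i \<ge> 0"
proof (induction i arbitrary: k V w)
  case 0
  then show ?case by simp
next
  case (Suc i)
  have "0 \<le> real (card V) * (real (card V) - 1)"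
    by (cases "card V") auto
  moreover have "0 \<le> (\<Sum>p\<in>{(x,y). x \<in> V \<and> y \<in> V \<and> x \<noteq> y}.
        Wvec (k - 1) (V - {fst p, snd p}) (\<lambda>e. w (insert (fst p) e) - w (insert (snd p) e)) i)"
    by (rule sum_nonneg) (rule Suc.IH)
  ultimately show ?case by simp
qed

lemma Wvec_Suc_Pairs:
  "Wvec k V w (Suc i) = (\<Sum>p\<in>Pairs V. Wvec (k - 1) (V - {fst p, snd p})
        (\<lambda>e. w (insert (fst p) e) - w (insert (snd p) e)) i) / (real (card V) * (real (card V) - 1))"
  by (simp add: Pairs_def)

lemma ksets_0:
  fixes A :: "'a set"
  assumes fA: "finite A"
  shows "ksets A 0 = {{}}"
proof (intro equalityI subsetI)
  fix e :: "'a set" assume "e \<in> ksets A 0"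
  then have e: "e \<subseteq> A" "card e = 0" by (auto simp: ksets_def)
  have "finite e" using e(1) fA by (rule finite_subset)
  then have "e = {}" using e(2) by simp
  then show "e \<in> {{}}" by simp
next
  fix e :: "'a set" assume "e \<in> {{}}"
  then show "e \<in> ksets A 0" by (simp add: ksets_def)
qed

lemma lower0:
  assumes fA: "finite A" and fB: "finite B" and cA: "card A = n" and cB: "card B = n" and kn: "k \<le> n" and k: "k \<ge> 1"
  shows "fact n * (real n / real k) ^ k * (Wvec k A w 0 * Wvec k B u 0) \<le> (\<Sum>\<pi>\<in>Bij A B. \<bar>Fk k A w u \<pi>\<bar>)"
proof -
  define C where "C = real (n choose k)"
  have Cpos: "C > 0" unfolding C_def using kn by simp
  have W0: "Wvec k A w 0 = \<bar>\<Sum>e\<in>ksets A k. w e\<bar> / C" unfolding C_def using cA by simp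
  have U0: "Wvec k B u 0 = \<bar>\<Sum>e\<in>ksets B k. u e\<bar> / C" unfolding C_def using cB by simp
  have "(\<Sum>\<pi>\<in>Bij A B. \<bar>Fk k A w u \<pi>\<bar>) \<ge> \<bar>\<Sum>\<pi>\<in>Bij A B. Fk k A w u \<pi>\<bar>" by (rule sum_abs)
  also have "\<bar>\<Sum>\<pi>\<in>Bij A B. Fk k A w u \<pi>\<bar> = fact n / C * \<bar>\<Sum>e\<in>ksets A k. w e\<bar> * \<bar>\<Sum>f\<in>ksets B k. u f\<bar>"
    unfolding sum_Fk[OF fA fB cA cB kn] C_def[symmetric] using Cpos by (simp add: abs_mult)
  also have "\<dots> = fact n * C * (Wvec k A w 0 * Wvec k B u 0)"
    unfolding W0 U0 using Cpos by (simp add: field_simps power2_eq_square)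
  finally have a: "fact n * C * (Wvec k A w 0 * Wvec k B u 0) \<le> (\<Sum>\<pi>\<in>Bij A B. \<bar>Fk k A w u \<pi>\<bar>)" .
  have b: "(real n / real k) ^ k \<le> C" unfolding C_def by (rule binomial_ge_n_over_k_pow_k[OF kn])
  have c: "0 \<le> Wvec k A w 0 * Wvec k B u 0" using Wvec_nonneg by (simp add: mult_nonneg_nonneg)
  have "fact n * (real n / real k) ^ k * (Wvec k A w 0 * Wvec k B u 0) \<le> fact n * C * (Wvec k A w 0 * Wvec k B u 0)"
    by (intro mult_right_mono mult_left_mono b c) simp
  then show ?thesis using a by linarith
qed


lemma powr_shift:
  assumes "x > 0"
  shows "x powr (- real (Suc j) / 2) = x powr (- real j / 2) / sqrt x"
proof -
  have e: "- real (Suc j) / 2 = - real j / 2 - 1/2" by simp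
  have "x powr (- real (Suc j) / 2) = x powr (- real j / 2 - 1/2)" by (simp only: e)
  also have "\<dots> = x powr (- real j / 2) / x powr (1/2)" by (rule powr_diff)
  finally have "x powr (- real (Suc j) / 2) = x powr (- real j / 2) / x powr (1/2)" .
  also have "x powr (1/2) = sqrt x" using assms by (simp add: powr_half_sqrt)
  finally show ?thesis .
qed

lemma aax: "(a::real) \<noteq> 0 \<Longrightarrow> a * a / (X * a) = a / X"
  by simp

lemma baa: "(a::real) \<noteq> 0 \<Longrightarrow> b * (a * a) / a = b * a"
  by simp

lemma tail_bound:
  fixes k' n :: nat and c' :: real and A B :: "'a set"
  assumes c'0: "c' > 0"
    and IH: "\<And>(A'::'a set) B' w' u'. finite A' \<Longrightarrow> finite B' \<Longrightarrow> card A' = card B' \<Longrightarrow> 2 * k' < card A' \<Longrightarrow>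
           c' * fact (card A') * real (card A') ^ k' * Wsum k' A' B' w' u' \<le> (\<Sum>\<pi>\<in>Bij A' B'. \<bar>Fk k' A' w' u' \<pi>\<bar>)"
    and fA: "finite A" and fB: "finite B" and cA: "card A = n" and cB: "card B = n" and big: "2 * Suc k' < n"
  shows "c' / (2 * 3 ^ Suc k' * sqrt (3 * real (Suc k')) * 3 ^ k') * fact n * real n ^ Suc k'
           * (\<Sum>j=0..k'. real n powr (- real (Suc j) / 2) * Wvec (Suc k') A w (Suc j) * Wvec (Suc k') B u (Suc j))
         \<le> (\<Sum>\<pi>\<in>Bij A B. \<bar>Fk (Suc k') A w u \<pi>\<bar>)"
proof -
  define k where "k = Suc k'"
  define m where "m = n div 2"
  define N where "N = real n * (real n - 1)"
  define S where "S = (\<Sum>\<pi>\<in>Bij A B. \<bar>Fk k A w u \<pi>\<bar>)"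
  define K where "K = 2 * 3 ^ k * sqrt (real k * real m)"
  define Wa where "Wa p = (\<lambda>e. w (insert (fst p) e) - w (insert (snd p) e))" for p :: "'a \<times> 'a"
  define Ua where "Ua p = (\<lambda>e. u (insert (fst p) e) - u (insert (snd p) e))" for p :: "'a \<times> 'a"
  define W where "W j = Wvec k A w (Suc j)" for j
  define U where "U j = Wvec k B u (Suc j)" for j
  define T' where "T' = (\<Sum>j=0..k'. (real n - 2) powr (- real j / 2) * W j * U j)"
  define T'' where "T'' = (\<Sum>j=0..k'. real n powr (- real j / 2) * W j * U j)"
  define f2 where "f2 = (fact (n - 2) :: real)"
  have n3: "n \<ge> 3" using big by simp
  have n2: "n \<ge> 2" using big by simp
  have r3: "real n \<ge> 3" using n3 by simp
  have m1: "m \<ge> 1" unfolding m_def using n3 by simp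
  have nm: "n \<le> 3 * m" unfolding m_def using n3 by presburger
  have Npos: "N > 0" unfolding N_def using r3 by simp
  have kk: "k \<ge> 1" "k - 1 = k'" unfolding k_def by simp_all
  have rn2: "real (n - 2) = real n - 2" using n2 by simp
  have WU0: "0 \<le> W j * U j" for j
  proof -
    have "0 \<le> W j" unfolding W_def by (rule Wvec_nonneg)
    moreover have "0 \<le> U j" unfolding U_def by (rule Wvec_nonneg)
    ultimately show ?thesis by (rule mult_nonneg_nonneg)
  qed
  have f2pos: "f2 > 0" unfolding f2_def by simp
  have fn: "fact n = N * f2" unfolding N_def f2_def using fact_minus2[OF n2] by (simp add: mult_ac)

  have inner: "c' * f2 * (real n - 2) ^ k' * Wsum k' (A - {fst p, snd p}) (B - {fst q, snd q}) (Wa p) (Ua q)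
        \<le> (\<Sum>\<sigma>\<in>Bij (A - {fst p, snd p}) (B - {fst q, snd q}). \<bar>Fk k' (A - {fst p, snd p}) (Wa p) (Ua q) \<sigma>\<bar>)"
    if p: "p \<in> Pairs A" and q: "q \<in> Pairs B" for p q
  proof -
    have c1: "card (A - {fst p, snd p}) = n - 2"
      using p cA card_minus2[OF fA, of "fst p" "snd p"] by (auto simp: Pairs_def)
    have c2: "card (B - {fst q, snd q}) = n - 2"
      using q cB card_minus2[OF fB, of "fst q" "snd q"] by (auto simp: Pairs_def)
    have h: "c' * fact (card (A - {fst p, snd p})) * real (card (A - {fst p, snd p})) ^ k'
              * Wsum k' (A - {fst p, snd p}) (B - {fst q, snd q}) (Wa p) (Ua q)
            \<le> (\<Sum>\<sigma>\<in>Bij (A - {fst p, snd p}) (B - {fst q, snd q}). \<bar>Fk k' (A - {fst p, snd p}) (Wa p) (Ua q) \<sigma>\<bar>)"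
    proof (rule IH)
      show "finite (A - {fst p, snd p})" using fA by simp
      show "finite (B - {fst q, snd q})" using fB by simp
      show "card (A - {fst p, snd p}) = card (B - {fst q, snd q})" using c1 c2 by simp
      show "2 * k' < card (A - {fst p, snd p})" using c1 big by simp
    qed
    show ?thesis using h unfolding c1 rn2 f2_def .
  qed

  have sumW: "(\<Sum>p\<in>Pairs A. Wvec k' (A - {fst p, snd p}) (Wa p) j) = N * W j" for j
  proof -
    have "W j = (\<Sum>p\<in>Pairs A. Wvec k' (A - {fst p, snd p}) (Wa p) j) / N"
      unfolding W_def Wvec_Suc_Pairs[of k A w j] kk(2) N_def cA Wa_def ..
    then show ?thesis using Npos by (simp add: field_simps)
  qed
  have sumU: "(\<Sum>q\<in>Pairs B. Wvec k' (B - {fst q, snd q}) (Ua q) j) = N * U j" for j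
  proof -
    have "U j = (\<Sum>q\<in>Pairs B. Wvec k' (B - {fst q, snd q}) (Ua q) j) / N"
      unfolding U_def Wvec_Suc_Pairs[of k B u j] kk(2) N_def cB Ua_def ..
    then show ?thesis using Npos by (simp add: field_simps)
  qed

  have Wsum_eq: "Wsum k' (A - {fst p, snd p}) (B - {fst q, snd q}) (Wa p) (Ua q)
      = (\<Sum>j=0..k'. (real n - 2) powr (- real j / 2) * Wvec k' (A - {fst p, snd p}) (Wa p) j * Wvec k' (B - {fst q, snd q}) (Ua q) j)"
    if p: "p \<in> Pairs A" for p q
  proof -
    have c1: "card (A - {fst p, snd p}) = n - 2"
      using p cA card_minus2[OF fA, of "fst p" "snd p"] by (auto simp: Pairs_def)
    show ?thesis unfolding Wsum_def c1 rn2 ..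
  qed

  have prod3: "(\<Sum>q\<in>Pairs B. \<Sum>p\<in>Pairs A. c * a p * b q) = c * (\<Sum>p\<in>Pairs A. a p) * (\<Sum>q\<in>Pairs B. b q)"
    for c :: real and a b :: "'a \<times> 'a \<Rightarrow> real"
  proof -
    have "c * (\<Sum>p\<in>Pairs A. a p) * (\<Sum>q\<in>Pairs B. b q) = (\<Sum>q\<in>Pairs B. c * (\<Sum>p\<in>Pairs A. a p) * b q)"
      by (rule sum_distrib_left)
    also have "\<dots> = (\<Sum>q\<in>Pairs B. \<Sum>p\<in>Pairs A. c * a p * b q)"
      by (rule sum.cong[OF refl]) (simp add: sum_distrib_left sum_distrib_right)
    finally show ?thesis by simp
  qed
  have dbl: "(\<Sum>q\<in>Pairs B. \<Sum>p\<in>Pairs A. Wsum k' (A - {fst p, snd p}) (B - {fst q, snd q}) (Wa p) (Ua q)) = N\<^sup>2 * T'"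
  proof -
    let ?f = "\<lambda>j p q. (real n - 2) powr (- real j / 2) * Wvec k' (A - {fst p, snd p}) (Wa p) j * Wvec k' (B - {fst q, snd q}) (Ua q) j"
    have "(\<Sum>q\<in>Pairs B. \<Sum>p\<in>Pairs A. Wsum k' (A - {fst p, snd p}) (B - {fst q, snd q}) (Wa p) (Ua q))
        = (\<Sum>q\<in>Pairs B. \<Sum>p\<in>Pairs A. \<Sum>j=0..k'. ?f j p q)"
      by (rule sum.cong[OF refl], rule sum.cong[OF refl], rule Wsum_eq)
    also have "\<dots> = (\<Sum>q\<in>Pairs B. \<Sum>j=0..k'. \<Sum>p\<in>Pairs A. ?f j p q)"
      by (rule sum.cong[OF refl]) (rule sum.swap)
    also have "\<dots> = (\<Sum>j=0..k'. \<Sum>q\<in>Pairs B. \<Sum>p\<in>Pairs A. ?f j p q)"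
      by (rule sum.swap)
    also have "\<dots> = (\<Sum>j=0..k'. (real n - 2) powr (- real j / 2) * (\<Sum>p\<in>Pairs A. Wvec k' (A - {fst p, snd p}) (Wa p) j) * (\<Sum>q\<in>Pairs B. Wvec k' (B - {fst q, snd q}) (Ua q) j))"
      by (rule sum.cong[OF refl]) (rule prod3)
    also have "\<dots> = (\<Sum>j=0..k'. (real n - 2) powr (- real j / 2) * (N * W j) * (N * U j))"
      by (simp only: sumW sumU)
    also have "\<dots> = N\<^sup>2 * T'" unfolding T'_def by (simp add: sum_distrib_left power2_eq_square mult_ac)
    finally show ?thesis .
  qed

  have Hs: "(\<Sum>q\<in>Pairs B. \<Sum>\<pi>\<in>Bij A B. \<bar>Fk k A w u \<pi> - Fk k A w u (Transposition.transpose (fst q) (snd q) \<circ> \<pi>)\<bar>)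
      = (\<Sum>q\<in>Pairs B. \<Sum>p\<in>Pairs A. \<Sum>\<sigma>\<in>Bij (A - {fst p, snd p}) (B - {fst q, snd q}). \<bar>Fk k' (A - {fst p, snd p}) (Wa p) (Ua q) \<sigma>\<bar>)"
  proof (rule sum.cong[OF refl])
    fix q assume q: "q \<in> Pairs B"
    have q': "fst q \<in> B" "snd q \<in> B" "fst q \<noteq> snd q" using q by (auto simp: Pairs_def)
    show "(\<Sum>\<pi>\<in>Bij A B. \<bar>Fk k A w u \<pi> - Fk k A w u (Transposition.transpose (fst q) (snd q) \<circ> \<pi>)\<bar>)
      = (\<Sum>p\<in>Pairs A. \<Sum>\<sigma>\<in>Bij (A - {fst p, snd p}) (B - {fst q, snd q}). \<bar>Fk k' (A - {fst p, snd p}) (Wa p) (Ua q) \<sigma>\<bar>)"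
      using H_split[OF fA fB q'(1) q'(2) q'(3) kk(1), of w u] unfolding kk(2) Wa_def Ua_def .
  qed
  have up: "(\<Sum>q\<in>Pairs B. \<Sum>\<pi>\<in>Bij A B. \<bar>Fk k A w u \<pi> - Fk k A w u (Transposition.transpose (fst q) (snd q) \<circ> \<pi>)\<bar>)
      \<le> N * K / real m * S"
    using avg_pairs[OF fA fB cA cB n2 kk(1), of w u] unfolding N_def K_def S_def m_def by (simp add: mult_ac)
  have low: "c' * f2 * (real n - 2) ^ k' * (N\<^sup>2 * T')
      \<le> (\<Sum>q\<in>Pairs B. \<Sum>p\<in>Pairs A. \<Sum>\<sigma>\<in>Bij (A - {fst p, snd p}) (B - {fst q, snd q}). \<bar>Fk k' (A - {fst p, snd p}) (Wa p) (Ua q) \<sigma>\<bar>)"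
  proof -
    have "c' * f2 * (real n - 2) ^ k' * (N\<^sup>2 * T')
        = (\<Sum>q\<in>Pairs B. \<Sum>p\<in>Pairs A. c' * f2 * (real n - 2) ^ k' * Wsum k' (A - {fst p, snd p}) (B - {fst q, snd q}) (Wa p) (Ua q))"
      unfolding dbl[symmetric] by (simp add: sum_distrib_left)
    also have "\<dots> \<le> (\<Sum>q\<in>Pairs B. \<Sum>p\<in>Pairs A. \<Sum>\<sigma>\<in>Bij (A - {fst p, snd p}) (B - {fst q, snd q}). \<bar>Fk k' (A - {fst p, snd p}) (Wa p) (Ua q) \<sigma>\<bar>)"
      by (intro sum_mono inner)
    finally show ?thesis .
  qed
  have main1: "c' * f2 * (real n - 2) ^ k' * (N\<^sup>2 * T') \<le> N * K / real m * S"
    using low up Hs by linarith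

  have Kpos: "K > 0" unfolding K_def using m1 kk(1) by simp
  have mpos: "real m > 0" using m1 by simp
  have T'0: "T' \<ge> 0" unfolding T'_def using WU0 by (intro sum_nonneg) (simp add: mult.assoc)
  have main2: "c' * fact n * (real n - 2) ^ k' * T' * (real m / K) \<le> S"
  proof -
    have "c' * fact n * (real n - 2) ^ k' * T' * (real m / K) = (c' * f2 * (real n - 2) ^ k' * (N\<^sup>2 * T')) * (real m / (N * K))"
      unfolding fn using Npos Kpos by (simp add: field_simps power2_eq_square)
    also have "\<dots> \<le> (N * K / real m * S) * (real m / (N * K))"
      by (rule mult_right_mono[OF main1]) (use Npos Kpos mpos in simp)
    also have "\<dots> = S" using Npos Kpos mpos by (simp add: field_simps)
    finally show ?thesis .
  qed

  have b1: "(real n / 3) ^ k' \<le> (real n - 2) ^ k'"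
    by (rule power_mono) (use r3 in simp_all)
  have b2: "T'' \<le> T'"
    unfolding T'_def T''_def
  proof (rule sum_mono)
    fix j assume "j \<in> {0..k'}"
    have "real n powr (- real j / 2) \<le> (real n - 2) powr (- real j / 2)"
      by (rule powr_mono2') (use r3 in simp_all)
    then show "real n powr (- real j / 2) * W j * U j \<le> (real n - 2) powr (- real j / 2) * W j * U j"
      using WU0[of j] by (simp add: mult.assoc mult_right_mono)
  qed
  have T''0: "T'' \<ge> 0" unfolding T''_def using WU0 by (intro sum_nonneg) (simp add: mult.assoc)
  have b3: "sqrt (real n) / (2 * 3 ^ k * sqrt (3 * real k)) \<le> real m / K"
  proof -
    define X where "X = 2 * 3 ^ k * sqrt (real k)"
    have Xpos: "X > 0" unfolding X_def using kk(1) by simp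
    have sm: "real m = sqrt (real m) * sqrt (real m)" by simp
    have e1: "real m / K = sqrt (real m) / X"
    proof -
      have "K = X * sqrt (real m)" unfolding K_def X_def by (simp add: real_sqrt_mult mult_ac)
      then have "real m / K = real m / (X * sqrt (real m))" by simp
      also have "\<dots> = (sqrt (real m) * sqrt (real m)) / (X * sqrt (real m))"
        by (rule arg_cong[where f="\<lambda>t. t / (X * sqrt (real m))"]) (rule sm)
      also have "\<dots> = sqrt (real m) / X" using mpos by (intro aax) simp
      finally show ?thesis .
    qed
    have e2: "sqrt (real n) / (2 * 3 ^ k * sqrt (3 * real k)) = sqrt (real n) / sqrt 3 / X"
      unfolding X_def by (simp add: real_sqrt_mult mult_ac)
    have "sqrt (real n) / sqrt 3 \<le> sqrt (real m)"
    proof -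
      have "real n / 3 \<le> real m" using nm by simp
      then have "sqrt (real n / 3) \<le> sqrt (real m)" by (rule real_sqrt_le_mono)
      then show ?thesis by (simp add: real_sqrt_divide)
    qed
    then have "sqrt (real n) / sqrt 3 / X \<le> sqrt (real m) / X" by (rule divide_right_mono) (use Xpos in simp)
    then show ?thesis unfolding e1 e2 .
  qed
  have main3: "c' * fact n * (real n / 3) ^ k' * T'' * (sqrt (real n) / (2 * 3 ^ k * sqrt (3 * real k))) \<le> S"
  proof -
    have p1: "0 \<le> c' * fact n" using c'0 by simp
    have s1: "c' * fact n * (real n / 3) ^ k' \<le> c' * fact n * (real n - 2) ^ k'"
      by (rule mult_left_mono[OF b1 p1])
    have p2: "0 \<le> c' * fact n * (real n - 2) ^ k'" using p1 r3 by simp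
    have s2: "c' * fact n * (real n / 3) ^ k' * T'' \<le> c' * fact n * (real n - 2) ^ k' * T'"
      by (rule mult_mono[OF s1 b2 p2 T''0])
    have p3: "0 \<le> c' * fact n * (real n - 2) ^ k' * T'" using p2 T'0 by simp
    have p4: "0 \<le> sqrt (real n) / (2 * 3 ^ k * sqrt (3 * real k))" by simp
    have "c' * fact n * (real n / 3) ^ k' * T'' * (sqrt (real n) / (2 * 3 ^ k * sqrt (3 * real k)))
          \<le> c' * fact n * (real n - 2) ^ k' * T' * (real m / K)"
      by (rule mult_mono[OF s2 b3 p3 p4])
    then show ?thesis using main2 by linarith
  qed
  have npos: "real n > 0" using r3 by simp
  have eqsum0: "(\<Sum>j=0..k'. real n powr (- real (Suc j) / 2) * Wvec (Suc k') A w (Suc j) * Wvec (Suc k') B u (Suc j))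
       = (\<Sum>j=0..k'. real n powr (- real (Suc j) / 2) * W j * U j)"
    by (simp only: W_def U_def k_def)
  also have "\<dots> = (\<Sum>j=0..k'. real n powr (- real j / 2) / sqrt (real n) * W j * U j)"
    by (rule sum.cong[OF refl]) (simp only: powr_shift[OF npos])
  also have "\<dots> = T'' / sqrt (real n)"
    unfolding T''_def by (simp add: sum_divide_distrib)
  finally have eqsum: "(\<Sum>j=0..k'. real n powr (- real (Suc j) / 2) * Wvec (Suc k') A w (Suc j) * Wvec (Suc k') B u (Suc j))
       = T'' / sqrt (real n)" .
  have sq: "real n ^ Suc k' / sqrt (real n) = real n ^ k' * sqrt (real n)"
  proof -
    have h: "sqrt (real n) * sqrt (real n) = real n" using npos by simp
    have sp: "sqrt (real n) > 0" using npos by simp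
    have "real n ^ Suc k' / sqrt (real n) = real n ^ k' * (sqrt (real n) * sqrt (real n)) / sqrt (real n)"
      by (simp only: h power_Suc2)
    also have "\<dots> = real n ^ k' * sqrt (real n)" using sp by (intro baa) simp
    finally show ?thesis .
  qed
  define D where "D = 2 * 3 ^ k * sqrt (3 * real k)"
  have Dpos: "D > 0" unfolding D_def using kk(1) by simp
  have "c' / (2 * 3 ^ Suc k' * sqrt (3 * real (Suc k')) * 3 ^ k') * fact n * real n ^ Suc k'
           * (\<Sum>j=0..k'. real n powr (- real (Suc j) / 2) * Wvec (Suc k') A w (Suc j) * Wvec (Suc k') B u (Suc j))
        = c' / (D * 3 ^ k') * fact n * real n ^ Suc k' * (T'' / sqrt (real n))"
    unfolding eqsum D_def k_def ..
  also have "\<dots> = c' / (D * 3 ^ k') * fact n * (real n ^ Suc k' / sqrt (real n)) * T''"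
    by simp
  also have "\<dots> = c' / (D * 3 ^ k') * fact n * (real n ^ k' * sqrt (real n)) * T''"
    unfolding sq ..
  also have "\<dots> = c' * fact n * (real n ^ k' / 3 ^ k') * T'' * (sqrt (real n) / D)"
    using Dpos by (simp add: field_simps)
  also have "\<dots> = c' * fact n * (real n / 3) ^ k' * T'' * (sqrt (real n) / D)"
    by (simp add: power_divide)
  also have "\<dots> \<le> S" using main3 unfolding D_def .
  finally show ?thesis unfolding S_def k_def .
qed


lemma main_gen:
  "\<exists>c>0. \<forall>(A::'a set) B w u. finite A \<longrightarrow> finite B \<longrightarrow> card A = card B \<longrightarrow> 2 * k < card A \<longrightarrow>
      c * fact (card A) * real (card A) ^ k * Wsum k A B w u \<le> (\<Sum>\<pi>\<in>Bij A B. \<bar>Fk k A w u \<pi>\<bar>)"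
proof (induction k)
  case 0
  show ?case
  proof (intro exI[of _ 1] conjI allI impI)
    show "(0::real) < 1" by simp
    fix A B :: "'a set" and w u :: "'a set \<Rightarrow> real"
    assume fA: "finite A" and fB: "finite B" and cAB: "card A = card B" and big: "2 * 0 < card A"
    have K0: "ksets A 0 = {{}}" by (rule ksets_0[OF fA])
    have K0': "ksets B 0 = {{}}" by (rule ksets_0[OF fB])
    have F: "Fk 0 A w u \<pi> = w {} * u {}" for \<pi> :: "'a \<Rightarrow> 'a" unfolding Fk_def K0 by simp
    have "(\<Sum>\<pi>\<in>Bij A B. \<bar>Fk 0 A w u \<pi>\<bar>) = real (card (Bij A B)) * \<bar>w {} * u {}\<bar>" unfolding F by simp
    also have "\<dots> = fact (card A) * (\<bar>w {}\<bar> * \<bar>u {}\<bar>)" using card_Bij[OF fA fB cAB] by (simp add: abs_mult)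
    finally have L: "(\<Sum>\<pi>\<in>Bij A B. \<bar>Fk 0 A w u \<pi>\<bar>) = fact (card A) * (\<bar>w {}\<bar> * \<bar>u {}\<bar>)" .
    have npos: "real (card A) > 0" using big by simp
    have W: "Wsum 0 A B w u = \<bar>w {}\<bar> * \<bar>u {}\<bar>" unfolding Wsum_def using npos by (simp add: K0 K0')
    show "1 * fact (card A) * real (card A) ^ 0 * Wsum 0 A B w u \<le> (\<Sum>\<pi>\<in>Bij A B. \<bar>Fk 0 A w u \<pi>\<bar>)"
      unfolding L W by simp
  qed
next
  case (Suc k')
  obtain c' where c'0: "c' > 0" and IH: "\<forall>(A::'a set) B w u. finite A \<longrightarrow> finite B \<longrightarrow> card A = card B \<longrightarrow> 2 * k' < card A \<longrightarrow>
      c' * fact (card A) * real (card A) ^ k' * Wsum k' A B w u \<le> (\<Sum>\<pi>\<in>Bij A B. \<bar>Fk k' A w u \<pi>\<bar>)"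
    using Suc.IH by blast
  have IH': "\<And>(A'::'a set) B' w' u'. finite A' \<Longrightarrow> finite B' \<Longrightarrow> card A' = card B' \<Longrightarrow> 2 * k' < card A' \<Longrightarrow>
           c' * fact (card A') * real (card A') ^ k' * Wsum k' A' B' w' u' \<le> (\<Sum>\<pi>\<in>Bij A' B'. \<bar>Fk k' A' w' u' \<pi>\<bar>)"
    using IH by blast
  define k where "k = Suc k'"
  define D where "D = c' / (2 * 3 ^ Suc k' * sqrt (3 * real (Suc k')) * 3 ^ k')"
  define c where "c = min D (1 / real k ^ k) / 2"
  have Dpos: "D > 0" unfolding D_def using c'0 by simp
  have cpos: "c > 0" unfolding c_def using Dpos by (simp add: k_def)
  show ?case
  proof (intro exI[of _ c] conjI allI impI)
    show "c > 0" by (rule cpos)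
    fix A B :: "'a set" and w u :: "'a set \<Rightarrow> real"
    assume fA: "finite A" and fB: "finite B" and cAB: "card A = card B" and big: "2 * Suc k' < card A"
    define n where "n = card A"
    define S where "S = (\<Sum>\<pi>\<in>Bij A B. \<bar>Fk (Suc k') A w u \<pi>\<bar>)"
    define W0 where "W0 = Wvec (Suc k') A w 0 * Wvec (Suc k') B u 0"
    define R where "R = (\<Sum>j=0..k'. real n powr (- real (Suc j) / 2) * Wvec (Suc k') A w (Suc j) * Wvec (Suc k') B u (Suc j))"
    have cA: "card A = n" and cB: "card B = n" using cAB by (simp_all add: n_def)
    have big': "2 * Suc k' < n" using big by (simp add: n_def)
    have kn: "Suc k' \<le> n" using big' by simp
    have npos: "real n > 0" using big' by simp
    have W00: "W0 \<ge> 0" unfolding W0_def by (intro mult_nonneg_nonneg Wvec_nonneg)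
    have R0: "R \<ge> 0" unfolding R_def by (intro sum_nonneg mult_nonneg_nonneg powr_ge_zero Wvec_nonneg)
    have T0: "fact n * (real n / real (Suc k')) ^ Suc k' * W0 \<le> S"
      unfolding W0_def S_def by (rule lower0[OF fA fB cA cB kn]) simp
    have T1: "D * fact n * real n ^ Suc k' * R \<le> S"
      unfolding D_def R_def S_def by (rule tail_bound[OF c'0 IH' fA fB cA cB big'])
    have p0: "real n powr (- real (0::nat) / 2) = 1" using npos by simp
    have Wsplit: "Wsum (Suc k') A B w u = W0 + R"
      unfolding Wsum_def n_def[symmetric] sum.atLeast0_atMost_Suc_shift p0 W0_def R_def
      by (simp only: mult_1_left comp_def)
    have c1: "c \<le> D / 2" unfolding c_def by simp
    have c2: "c \<le> (1 / real (Suc k') ^ Suc k') / 2" unfolding c_def k_def by simp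
    have fnn: "0 \<le> fact n * real n ^ Suc k'" by simp
    have A1: "c * fact n * real n ^ Suc k' * W0 \<le> S / 2"
    proof -
      have "c * fact n * real n ^ Suc k' * W0 \<le> ((1 / real (Suc k') ^ Suc k') / 2) * (fact n * real n ^ Suc k' * W0)"
        using mult_right_mono[OF c2, of "fact n * real n ^ Suc k' * W0"] fnn W00 by (simp add: mult_ac)
      also have "\<dots> = ((1 / real (Suc k') ^ Suc k') * (fact n * real n ^ Suc k' * W0)) / 2" by simp
      also have "\<dots> = (fact n * (real n / real (Suc k')) ^ Suc k' * W0) / 2"
      proof -
        have e: "(1 / real (Suc k') ^ Suc k') * (fact n * real n ^ Suc k' * W0) = fact n * (real n / real (Suc k')) ^ Suc k' * W0"
          by (simp add: power_divide)
        show ?thesis unfolding e ..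
      qed
      also have "\<dots> \<le> S / 2" by (rule divide_right_mono[OF T0]) simp
      finally show ?thesis .
    qed
    have A2: "c * fact n * real n ^ Suc k' * R \<le> S / 2"
    proof -
      have "c * fact n * real n ^ Suc k' * R \<le> (D / 2) * (fact n * real n ^ Suc k' * R)"
        using mult_right_mono[OF c1, of "fact n * real n ^ Suc k' * R"] fnn R0 by (simp add: mult_ac)
      also have "\<dots> = (D * fact n * real n ^ Suc k' * R) / 2" by simp
      also have "\<dots> \<le> S / 2" using T1 by simp
      finally show ?thesis .
    qed
    have "c * fact (card A) * real (card A) ^ Suc k' * Wsum (Suc k') A B w u
        = c * fact n * real n ^ Suc k' * W0 + c * fact n * real n ^ Suc k' * R"
      unfolding Wsplit n_def[symmetric] by (simp add: algebra_simps)
    also have "\<dots> \<le> S" using A1 A2 by linarith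
    finally show "c * fact (card A) * real (card A) ^ Suc k' * Wsum (Suc k') A B w u \<le> (\<Sum>\<pi>\<in>Bij A B. \<bar>Fk (Suc k') A w u \<pi>\<bar>)"
      unfolding S_def .
  qed
qed

lemma permutes_Bij:
  "bij_betw (\<lambda>\<pi>. restrict \<pi> V) {\<pi>. \<pi> permutes V} (Bij V V)"
proof (rule bij_betw_byWitness[where f'="\<lambda>\<sigma> z. if z \<in> V then \<sigma> z else z"])
  show "\<forall>\<pi>\<in>{\<pi>. \<pi> permutes V}. (\<lambda>z. if z \<in> V then restrict \<pi> V z else z) = \<pi>"
  proof
    fix \<pi> assume "\<pi> \<in> {\<pi>. \<pi> permutes V}"
    then have p: "\<pi> permutes V" by simp
    show "(\<lambda>z. if z \<in> V then restrict \<pi> V z else z) = \<pi>"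
    proof
      fix z show "(if z \<in> V then restrict \<pi> V z else z) = \<pi> z"
        using permutes_not_in[OF p, of z] by simp
    qed
  qed
  show "\<forall>\<sigma>\<in>Bij V V. restrict (\<lambda>z. if z \<in> V then \<sigma> z else z) V = \<sigma>"
  proof
    fix \<sigma> assume "\<sigma> \<in> Bij V V"
    then have e: "\<sigma> \<in> extensional V" by (simp add: Bij_def)
    show "restrict (\<lambda>z. if z \<in> V then \<sigma> z else z) V = \<sigma>"
    proof
      fix z show "restrict (\<lambda>z. if z \<in> V then \<sigma> z else z) V z = \<sigma> z"
        using e by (cases "z \<in> V") (auto simp: extensional_def)
    qed
  qed
  show "(\<lambda>\<pi>. restrict \<pi> V) ` {\<pi>. \<pi> permutes V} \<subseteq> Bij V V"
  proof
    fix \<sigma> assume "\<sigma> \<in> (\<lambda>\<pi>. restrict \<pi> V) ` {\<pi>. \<pi> permutes V}"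
    then obtain \<pi> where p: "\<pi> permutes V" and s: "\<sigma> = restrict \<pi> V" by auto
    have "bij_betw \<pi> V V" by (rule permutes_imp_bij[OF p])
    then have "bij_betw \<sigma> V V" unfolding s by (rule bij_betw_cong[THEN iffD1, rotated]) simp
    then show "\<sigma> \<in> Bij V V" unfolding Bij_def s by simp
  qed
  show "(\<lambda>\<sigma> z. if z \<in> V then \<sigma> z else z) ` Bij V V \<subseteq> {\<pi>. \<pi> permutes V}"
  proof
    fix \<pi> assume "\<pi> \<in> (\<lambda>\<sigma> z. if z \<in> V then \<sigma> z else z) ` Bij V V"
    then obtain \<sigma> where s: "\<sigma> \<in> Bij V V" and p: "\<pi> = (\<lambda>z. if z \<in> V then \<sigma> z else z)" by auto
    have "bij_betw \<sigma> V V" using s by (simp add: Bij_def)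
    then have "bij_betw \<pi> V V" unfolding p by (rule bij_betw_cong[THEN iffD1, rotated]) simp
    moreover have "\<And>x. x \<notin> V \<Longrightarrow> \<pi> x = x" unfolding p by simp
    ultimately show "\<pi> \<in> {\<pi>. \<pi> permutes V}" by (simp add: bij_imp_permutes)
  qed
qed

lemma hyp_inner_Fk:
  assumes p: "\<pi> permutes V"
  shows "hyp_inner V k (perm_weight \<pi> w) u = Fk k V w u (restrict \<pi> V)"
proof -
  have b: "bij_betw \<pi> V V" by (rule permutes_imp_bij[OF p])
  have bij: "bij \<pi>" by (rule permutes_bij[OF p])
  have inv: "inv \<pi> ` \<pi> ` e = e" for e
    using bij by (simp add: image_comp bij_is_inj)
  have "hyp_inner V k (perm_weight \<pi> w) u = (\<Sum>e\<in>ksets V k. w (inv \<pi> ` e) * u e)"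
    unfolding hyp_inner_def perm_weight_def ..
  also have "\<dots> = (\<Sum>e\<in>ksets V k. w (inv \<pi> ` \<pi> ` e) * u (\<pi> ` e))"
    by (rule sum.reindex_bij_betw[OF ksets_image_bij[OF b], symmetric])
  also have "\<dots> = Fk k V w u \<pi>" unfolding Fk_def inv ..
  also have "\<dots> = Fk k V w u (restrict \<pi> V)" by (rule Fk_cong) simp
  finally show ?thesis .
qed

theorem theorem1p4:
  fixes k :: nat
  assumes "k \<ge> 1"
  shows "\<exists>c>0. \<forall>n::nat. n > 2 * k \<longrightarrow>
    (\<forall>w u :: nat set \<Rightarrow> real.
      (\<Sum>\<pi>\<in>{\<pi>. \<pi> permutes {1..n}}.
          \<bar>hyp_inner {1..n} k (perm_weight \<pi> w) u\<bar>) / fact n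
      \<ge> c * real n ^ k *
        (\<Sum>i=0..k. real n powr (- real i / 2) * Wvec k {1..n} w i * Wvec k {1..n} u i))"
proof -
  obtain c where c: "c > 0" and M: "\<forall>(A::nat set) B w u. finite A \<longrightarrow> finite B \<longrightarrow> card A = card B \<longrightarrow> 2 * k < card A \<longrightarrow>
      c * fact (card A) * real (card A) ^ k * Wsum k A B w u \<le> (\<Sum>\<pi>\<in>Bij A B. \<bar>Fk k A w u \<pi>\<bar>)"
    using main_gen by blast
  show ?thesis
  proof (intro exI[of _ c] conjI allI impI)
    show "c > 0" by (rule c)
    fix n :: nat and w u :: "nat set \<Rightarrow> real"
    assume n: "n > 2 * k"
    define V where "V = {1..n}"
    have fV: "finite V" and cV: "card V = n" unfolding V_def by simp_all
    have "(\<Sum>\<pi>\<in>{\<pi>. \<pi> permutes V}. \<bar>hyp_inner V k (perm_weight \<pi> w) u\<bar>)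
        = (\<Sum>\<pi>\<in>{\<pi>. \<pi> permutes V}. \<bar>Fk k V w u (restrict \<pi> V)\<bar>)"
      by (rule sum.cong[OF refl]) (simp add: hyp_inner_Fk)
    also have "\<dots> = (\<Sum>\<sigma>\<in>Bij V V. \<bar>Fk k V w u \<sigma>\<bar>)"
      by (rule sum.reindex_bij_betw[OF permutes_Bij])
    finally have eq: "(\<Sum>\<pi>\<in>{\<pi>. \<pi> permutes V}. \<bar>hyp_inner V k (perm_weight \<pi> w) u\<bar>) = (\<Sum>\<sigma>\<in>Bij V V. \<bar>Fk k V w u \<sigma>\<bar>)" .
    have "c * fact n * real n ^ k * Wsum k V V w u \<le> (\<Sum>\<sigma>\<in>Bij V V. \<bar>Fk k V w u \<sigma>\<bar>)"
      using M fV cV n by auto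
    then have "c * real n ^ k * Wsum k V V w u \<le> (\<Sum>\<sigma>\<in>Bij V V. \<bar>Fk k V w u \<sigma>\<bar>) / fact n"
      by (simp add: field_simps)
    moreover have "Wsum k V V w u = (\<Sum>i=0..k. real n powr (- real i / 2) * Wvec k V w i * Wvec k V u i)"
      unfolding Wsum_def cV ..
    ultimately show "(\<Sum>\<pi>\<in>{\<pi>. \<pi> permutes {1..n}}. \<bar>hyp_inner {1..n} k (perm_weight \<pi> w) u\<bar>) / fact n
      \<ge> c * real n ^ k * (\<Sum>i=0..k. real n powr (- real i / 2) * Wvec k {1..n} w i * Wvec k {1..n} u i)"
      using eq unfolding V_def by simp
  qed
qed


end
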